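(* Let $p\ge3$ be a prime and let $C$ be a Hochschild cochain complex, free over $\mathbb Z$, with its cup product $*$ and brace operations. Let $\tilde x\in C$ be a cochain of odd degree with $\partial\tilde x\in pC$, and let $x$ be its image in $C\otimes\mathbb Z_p$, so that $x$ is a cycle. For a cochain $\tilde y$ with $\partial\tilde y\in pC$ and image $y$ mod $p$, define the chain-level Bockstein $\beta y:=\frac1p\partial\tilde y\bmod p$. Set $\xi_1x:=x^{[p]}$ and $\zeta_1x:=\sum_{i=1}^{p-1}\frac{(-1)^i}{i}x^{[i]}*x^{[p-i]}$, where $x^{[k]}=(\cdots((x\{x\})\{x\})\cdots)\{x\}$ ($k-1$ braces). Then, on the level of chains in $C\otimes\mathbb Z_p$, $$\zeta_1x=\beta(\xi_1x)-(\mathrm{ad}\,x)^{p-1}(\beta x),$$ where $\beta(\xi_1x)$ is computed from the lift $\tilde x^{[p]}$, and $\mathrm{ad}\,x=[x,\cdot\,]$ with Gerstenhaber bracket $[a,b]=a\{b\}-(-1)^{|a||b|}b\{a\}$, $|a|=\deg a+1$.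
   Context: For the Hochschild cochain complex of an associative algebra, $*$ is the cup product and $a\{b_1,\dots,b_n\}$ are the Gerstenhaber–Voronov brace operations; $\deg$ is the cochain degree, and the brace $\{\}_{n+1}$ raises $\deg$ by $n$. *)

theory Defs
  imports "HOL-Number_Theory.Cong"
begin

text \<open>A homogeneous cochain of degree n is a function f :: 'a list => 'a, of which only
the values on lists of length n matter, and which is additive in each of its n slots
(Z-multilinear).  Degrees are carried explicitly as natural-number parameters.\<close>

definition nsm :: "nat \<Rightarrow> 'a::comm_monoid_add \<Rightarrow> 'a" where
  "nsm k a = (\<Sum>i<k. a)"

definition zsm :: "int \<Rightarrow> 'a::ab_group_add \<Rightarrow> 'a" where
  "zsm k a = (if 0 \<le> k then nsm (nat k) a else - nsm (nat (- k)) a)"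

definition sgnpow :: "nat \<Rightarrow> 'a::ab_group_add \<Rightarrow> 'a" where
  "sgnpow k a = (if even k then a else - a)"

definition torsion_free :: "'a::ab_group_add itself \<Rightarrow> bool" where
  "torsion_free T \<longleftrightarrow> (\<forall>k (a::'a). 0 < k \<longrightarrow> nsm k a = 0 \<longrightarrow> a = 0)"

definition hoch_cochain :: "nat \<Rightarrow> ('a::ring list \<Rightarrow> 'a) \<Rightarrow> bool" where
  "hoch_cochain n f \<longleftrightarrow>
     (\<forall>xs ys u v. length xs + length ys + 1 = n \<longrightarrow>
        f (xs @ (u + v) # ys) = f (xs @ u # ys) + f (xs @ v # ys))"

definition cup :: "nat \<Rightarrow> ('a::ring list \<Rightarrow> 'a) \<Rightarrow> ('a list \<Rightarrow> 'a) \<Rightarrow> 'a list \<Rightarrow> 'a" where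
  "cup m f g = (\<lambda>xs. f (take m xs) * g (drop m xs))"

definition brace :: "nat \<Rightarrow> nat \<Rightarrow> ('a::ring list \<Rightarrow> 'a) \<Rightarrow> ('a list \<Rightarrow> 'a) \<Rightarrow> 'a list \<Rightarrow> 'a" where
  "brace m n f g = (\<lambda>xs. \<Sum>i<m. sgnpow ((n + 1) * i)
       (f (take i xs @ g (take n (drop i xs)) # drop (i + n) xs)))"

definition hdiff :: "nat \<Rightarrow> ('a::ring list \<Rightarrow> 'a) \<Rightarrow> 'a list \<Rightarrow> 'a" where
  "hdiff n f = (\<lambda>xs. xs ! 0 * f (drop 1 xs)
      + (\<Sum>i\<in>{1..n}. sgnpow i (f (take (i - 1) xs @ (xs ! (i - 1) * xs ! i) # drop (i + 1) xs)))
      + sgnpow (n + 1) (f (take n xs) * xs ! n))"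

definition gbracket :: "nat \<Rightarrow> nat \<Rightarrow> ('a::ring list \<Rightarrow> 'a) \<Rightarrow> ('a list \<Rightarrow> 'a) \<Rightarrow> 'a list \<Rightarrow> 'a" where
  "gbracket m n f g = (\<lambda>xs. brace m n f g xs - sgnpow ((m + 1) * (n + 1)) (brace n m g f xs))"

text \<open>Brace powers x^[k] = (..((x{x}){x})..){x} (k-1 braces), x of degree n;
x^[k] has degree k(n-1)+1.  The value at k = 0 is a junk value and never used.\<close>
fun brpow :: "nat \<Rightarrow> ('a::ring list \<Rightarrow> 'a) \<Rightarrow> nat \<Rightarrow> 'a list \<Rightarrow> 'a" where
  "brpow n x 0 = x"
| "brpow n x (Suc 0) = x"
| "brpow n x (Suc (Suc k)) = brace (Suc k * (n - 1) + 1) n (brpow n x (Suc k)) x"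

fun adpow :: "nat \<Rightarrow> nat \<Rightarrow> ('a::ring list \<Rightarrow> 'a) \<Rightarrow> nat \<Rightarrow> ('a list \<Rightarrow> 'a) \<Rightarrow> 'a list \<Rightarrow> 'a" where
  "adpow n m x 0 b = b"
| "adpow n m x (Suc k) b = gbracket n (m + k * (n - 1)) x (adpow n m x k b)"

definition bock :: "nat \<Rightarrow> nat \<Rightarrow> ('a::ring list \<Rightarrow> 'a) \<Rightarrow> 'a list \<Rightarrow> 'a" where
  "bock p N f = (\<lambda>xs. SOME z. nsm p z = hdiff N f xs)"

definition inv_modp :: "nat \<Rightarrow> nat \<Rightarrow> int" where
  "inv_modp p i = (SOME j. [int i * j = 1] (mod int p))"

definition xi1 :: "nat \<Rightarrow> nat \<Rightarrow> ('a::ring list \<Rightarrow> 'a) \<Rightarrow> 'a list \<Rightarrow> 'a" where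
  "xi1 p n x = brpow n x p"

definition zeta1 :: "nat \<Rightarrow> nat \<Rightarrow> ('a::ring list \<Rightarrow> 'a) \<Rightarrow> 'a list \<Rightarrow> 'a" where
  "zeta1 p n x = (\<lambda>xs. \<Sum>i\<in>{1..p - 1}.
      zsm ((-1) ^ i * inv_modp p i) (cup (i * (n - 1) + 1) (brpow n x i) (brpow n x (p - i)) xs))"

text \<open>Equality of degree-N cochains in C (x) Z_p = C / pC.\<close>
definition cong_modp :: "nat \<Rightarrow> nat \<Rightarrow> ('a::ring list \<Rightarrow> 'a) \<Rightarrow> ('a list \<Rightarrow> 'a) \<Rightarrow> bool" where
  "cong_modp p N f g \<longleftrightarrow> (\<forall>xs. length xs = N \<longrightarrow> (\<exists>z. f xs - g xs = nsm p z))"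

end

theory Submission
  imports Defs
begin

lemma nsm_0[simp]: "nsm 0 a = 0" by (simp add: nsm_def)
lemma nsm_Suc: "nsm (Suc k) a = a + nsm k a" by (simp add: nsm_def add.commute)
lemma nsm_1[simp]: "nsm 1 a = a" by (simp add: nsm_def)
lemma nsm_zero[simp]: "nsm k 0 = 0" by (simp add: nsm_def)
lemma nsm_add: "nsm k (a + b) = nsm k a + nsm k (b::'a::ab_group_add)"
  by (induct k) (simp_all add: nsm_Suc algebra_simps)
lemma nsm_neg: "nsm k (- a) = - nsm k (a::'a::ab_group_add)"
  by (induct k) (simp_all add: nsm_Suc algebra_simps)
lemma nsm_diff: "nsm k (a - b) = nsm k a - nsm k (b::'a::ab_group_add)"
  using nsm_add[of k a "-b"] nsm_neg[of k b] by simp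
lemma nsm_plus: "nsm (k + l) a = nsm k a + nsm l (a::'a::ab_group_add)"
  by (induct k) (simp_all add: nsm_Suc algebra_simps)
lemma nsm_mult: "nsm (k * l) a = nsm k (nsm l (a::'a::ab_group_add))"
  by (induct k) (simp_all add: nsm_Suc nsm_plus algebra_simps)
lemma nsm_sum: "nsm k (\<Sum>i\<in>A. f i) = (\<Sum>i\<in>A. nsm k (f i :: 'a::ab_group_add))"
  by (induct A rule: infinite_finite_induct) (simp_all add: nsm_add)
lemma nsm_mult_left: "nsm k (a * b) = nsm k a * (b::'a::ring)"
  by (induct k) (simp_all add: nsm_Suc algebra_simps)
lemma nsm_mult_right: "nsm k (a * b) = a * nsm k (b::'a::ring)"
  by (induct k) (simp_all add: nsm_Suc algebra_simps)

lemma zsm_int[simp]: "zsm (int k) a = nsm k a" by (simp add: zsm_def del: of_nat_Suc)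
lemma nsm_Suc0[simp]: "nsm (Suc 0) a = a" by (simp add: nsm_def)
lemma zsm_one[simp]: "zsm 1 a = a" using zsm_int[of 1 a] by simp
lemma zsm_neg_int: "zsm (- int k) a = - nsm k a"
  by (cases "k = 0") (simp_all add: zsm_def)
lemma zsm_add: "zsm c (a + b) = zsm c a + zsm c (b::'a::ab_group_add)"
  unfolding zsm_def nsm_add by simp
lemma zsm_neg: "zsm c (- a) = - zsm c (a::'a::ab_group_add)"
  unfolding zsm_def nsm_neg by simp
lemma zsm_zero[simp]: "zsm c 0 = 0" by (simp add: zsm_def)
lemma zsm_diff: "zsm c (a - b) = zsm c a - zsm c (b::'a::ab_group_add)"
  using zsm_add[of c a "-b"] zsm_neg[of c b] by simp
lemma zsm_sum: "zsm c (\<Sum>i\<in>A. f i) = (\<Sum>i\<in>A. zsm c (f i :: 'a::ab_group_add))"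
  by (induct A rule: infinite_finite_induct) (simp_all add: zsm_add)
lemma zsm_succ: "zsm (c + 1) a = zsm c a + (a::'a::ab_group_add)"
proof (cases "0 \<le> c")
  case True
  define k where "k = nat c"
  have c: "c = int k" using True k_def by simp
  have c1: "c + 1 = int (Suc k)" using c by simp
  show ?thesis unfolding c1 zsm_int unfolding c zsm_int nsm_Suc by (rule add.commute)
next
  case False
  define k where "k = nat (- c - 1)"
  have c: "c = - int (Suc k)" using False k_def by simp
  have c1: "c + 1 = - int k" using c by simp
  show ?thesis unfolding c1 zsm_neg_int unfolding c zsm_neg_int nsm_Suc by (simp add: algebra_simps)
qed
lemma zsm_plus: "zsm (c + d) a = zsm c a + zsm d (a::'a::ab_group_add)"
proof (induct d rule: int_induct[where k=0])
  case base then show ?case by (simp add: zsm_def)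
next
  case (step1 i)
  have e: "c + (i + 1) = (c + i) + 1" by simp
  have "zsm (c + (i + 1)) a = zsm (c + i) a + a" unfolding e by (rule zsm_succ)
  then show ?case using step1 zsm_succ[of i a] by (metis add.assoc)
next
  case (step2 i)
  have e1: "c + i = (c + (i - 1)) + 1" by simp
  have e2: "i = (i - 1) + 1" by simp
  have 1: "zsm (c + i) a = zsm (c + (i - 1)) a + a" by (subst e1, rule zsm_succ)
  have 2: "zsm i a = zsm (i - 1) a + a" by (subst e2, rule zsm_succ)
  from 1 2 step2 have "zsm (c + (i - 1)) a + a = zsm c a + zsm (i - 1) a + a"
    by (metis add.assoc)
  then show ?case by (metis add_right_cancel)
qed
lemma zsm_mult: "zsm (c * d) a = zsm c (zsm d (a::'a::ab_group_add))"
proof (induct c rule: int_induct[where k=0])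
  case base then show ?case by (simp add: zsm_def)
next
  case (step1 i)
  have e: "(i + 1) * d = i * d + d" by (simp add: algebra_simps)
  show ?case unfolding e zsm_plus zsm_one step1 ..
next
  case (step2 i)
  have e: "i * d = (i - 1) * d + d" by (simp add: algebra_simps)
  have e2: "i = (i - 1) + 1" by simp
  have "zsm ((i - 1) * d) a + zsm d a = zsm (i - 1) (zsm d a) + zsm d a"
    using step2(2) unfolding e zsm_plus by (metis e2 zsm_succ)
  then show ?case by (metis add_right_cancel)
qed
lemma zsm_mult_left: "zsm c (a * b) = zsm c a * (b::'a::ring)"
  by (simp add: zsm_def nsm_mult_left)
lemma zsm_mult_right: "zsm c (a * b) = a * zsm c (b::'a::ring)"
  by (simp add: zsm_def nsm_mult_right)
lemma zsm_pmult: "zsm (int p * e) a = nsm p (zsm e (a::'a::ab_group_add))"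
  by (simp add: zsm_mult)

lemma sgnpow_even[simp]: "even k \<Longrightarrow> sgnpow k a = a" by (simp add: sgnpow_def)
lemma sgnpow_odd[simp]: "odd k \<Longrightarrow> sgnpow k a = - a" by (simp add: sgnpow_def)
lemma sgnpow_0[simp]: "sgnpow 0 a = a" by simp
lemma sgnpow_Suc: "sgnpow (Suc k) a = - sgnpow k a" by (simp add: sgnpow_def)
lemma sgnpow_add: "sgnpow k (a + b) = sgnpow k a + sgnpow k (b::'a::ab_group_add)"
  by (simp add: sgnpow_def)
lemma sgnpow_neg: "sgnpow k (- a) = - sgnpow k (a::'a::ab_group_add)" by (simp add: sgnpow_def)
lemma sgnpow_diff: "sgnpow k (a - b) = sgnpow k a - sgnpow k (b::'a::ab_group_add)" by (simp add: sgnpow_def)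
lemma sgnpow_sgnpow: "sgnpow j (sgnpow k a) = sgnpow (j + k) (a::'a::ab_group_add)" by (simp add: sgnpow_def)
lemma sgnpow_cong: "even j = even k \<Longrightarrow> sgnpow j a = sgnpow k a" by (simp add: sgnpow_def)
lemma sgnpow_sum: "sgnpow k (\<Sum>i\<in>A. f i) = (\<Sum>i\<in>A. sgnpow k (f i :: 'a::ab_group_add))"
  by (simp add: sgnpow_def sum_negf)
lemma sgnpow_mult_left: "sgnpow k (a * b) = sgnpow k a * (b::'a::ring)" by (simp add: sgnpow_def)
lemma sgnpow_mult_right: "sgnpow k (a * b) = a * sgnpow k (b::'a::ring)" by (simp add: sgnpow_def)
lemma sgnpow_nsm: "sgnpow k (nsm j a) = nsm j (sgnpow k (a::'a::ab_group_add))" by (simp add: sgnpow_def nsm_neg)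
lemma sgnpow_zsm: "sgnpow k (zsm j a) = zsm j (sgnpow k (a::'a::ab_group_add))" by (simp add: sgnpow_def zsm_neg)

section \<open>multilinearity\<close>

lemma hoch_add: "hoch_cochain n f \<Longrightarrow> length xs + length ys + 1 = n \<Longrightarrow>
   f (xs @ (u + v) # ys) = f (xs @ u # ys) + f (xs @ v # ys)"
  by (simp add: hoch_cochain_def)
lemma hoch_zero: "hoch_cochain n f \<Longrightarrow> length xs + length ys + 1 = n \<Longrightarrow> f (xs @ 0 # ys) = 0"
  using hoch_add[of n f xs ys 0 0] by simp
lemma hoch_neg: "hoch_cochain n f \<Longrightarrow> length xs + length ys + 1 = n \<Longrightarrow> f (xs @ (- u) # ys) = - f (xs @ u # ys)"
  using hoch_add[of n f xs ys u "-u"] hoch_zero[of n f xs ys] by (simp add: eq_neg_iff_add_eq_0 add.commute)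
lemma hoch_diff: "hoch_cochain n f \<Longrightarrow> length xs + length ys + 1 = n \<Longrightarrow>
   f (xs @ (u - v) # ys) = f (xs @ u # ys) - f (xs @ v # ys)"
  using hoch_add[of n f xs ys u "-v"] hoch_neg[of n f xs ys v] by simp
lemma hoch_sum: "hoch_cochain n f \<Longrightarrow> length xs + length ys + 1 = n \<Longrightarrow>
   f (xs @ (\<Sum>i\<in>A. g i) # ys) = (\<Sum>i\<in>A. f (xs @ g i # ys))"
  by (induct A rule: infinite_finite_induct) (simp_all add: hoch_zero hoch_add)
lemma hoch_nsm: "hoch_cochain n f \<Longrightarrow> length xs + length ys + 1 = n \<Longrightarrow>
   f (xs @ nsm k u # ys) = nsm k (f (xs @ u # ys))"
  unfolding nsm_def by (rule hoch_sum)
lemma hoch_zsm: "hoch_cochain n f \<Longrightarrow> length xs + length ys + 1 = n \<Longrightarrow>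
   f (xs @ zsm k u # ys) = zsm k (f (xs @ u # ys))"
  by (simp add: zsm_def hoch_nsm hoch_neg)
lemma hoch_sgnpow: "hoch_cochain n f \<Longrightarrow> length xs + length ys + 1 = n \<Longrightarrow>
   f (xs @ sgnpow k u # ys) = sgnpow k (f (xs @ u # ys))"
  by (simp add: sgnpow_def hoch_neg)


definition ins :: "nat \<Rightarrow> nat \<Rightarrow> ('a list \<Rightarrow> 'a) \<Rightarrow> 'a list \<Rightarrow> 'a list" where
  "ins i k g xs = take i xs @ g (take k (drop i xs)) # drop (i + k) xs"

lemma brace_ins: "brace m n f g xs = (\<Sum>i<m. sgnpow ((n + 1) * i) (f (ins i n g xs)))"
  by (simp add: brace_def ins_def)

lemma length_ins: "i + k \<le> length xs \<Longrightarrow> length (ins i k g xs) = length xs + 1 - k"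
  by (simp add: ins_def)

lemma ins_before: "length xs < i \<Longrightarrow>
  ins i k g (xs @ w # ys) = xs @ w # ins (i - length xs - 1) k g ys"
  by (simp add: ins_def take_Cons' drop_Cons')

lemma ins_inside: "i \<le> length xs \<Longrightarrow> length xs < i + k \<Longrightarrow> i + k \<le> length xs + 1 + length ys \<Longrightarrow>
  ins i k g (xs @ w # ys) = take i xs @ g (drop i xs @ w # take (i + k - length xs - 1) ys) # drop (i + k - length xs - 1) ys"
  by (simp add: ins_def take_Cons' drop_Cons' add.commute)

lemma ins_after: "i + k \<le> length xs \<Longrightarrow>
  ins i k g (xs @ w # ys) = take i xs @ g (take k (drop i xs)) # (drop (i + k) xs @ w # ys)"
  by (simp add: ins_def)

lemma ins_add:
  assumes f: "hoch_cochain m f" and g: "hoch_cochain n g" and i: "i < m"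
    and len: "length xs + length ys + 1 + 1 = m + n"
  shows "f (ins i n g (xs @ (u + v) # ys)) = f (ins i n g (xs @ u # ys)) + f (ins i n g (xs @ v # ys))"
proof -
  consider "length xs < i" | "i \<le> length xs" "length xs < i + n" | "i + n \<le> length xs" by linarith
  then show ?thesis
  proof cases
    case 1
    have l: "length (ins (i - length xs - 1) n g ys) = length ys + 1 - n"
      using 1 i len by (intro length_ins) linarith
    show ?thesis unfolding ins_before[OF 1]
      by (rule hoch_add[OF f]) (use l 1 i len in linarith)
  next
    case 2
    have eq: "\<And>w. ins i n g (xs @ w # ys) = take i xs @ g (drop i xs @ w # take (i + n - length xs - 1) ys) # drop (i + n - length xs - 1) ys"
      using 2 i len by (intro ins_inside) linarith+
    have ga: "g (drop i xs @ (u + v) # take (i + n - length xs - 1) ys) =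
       g (drop i xs @ u # take (i + n - length xs - 1) ys) + g (drop i xs @ v # take (i + n - length xs - 1) ys)"
      by (rule hoch_add[OF g]) (use 2 i len in simp)
    show ?thesis unfolding eq ga
      by (rule hoch_add[OF f]) (use 2 i len in simp)
  next
    case 3
    show ?thesis unfolding ins_after[OF 3] append_Cons[symmetric] append_assoc[symmetric]
      by (rule hoch_add[OF f]) (use 3 i len in simp)
  qed
qed

lemma brace_hoch:
  assumes f: "hoch_cochain m f" and g: "hoch_cochain n g" and n: "1 \<le> n"
  shows "hoch_cochain (m + n - 1) (brace m n f g)"
  unfolding hoch_cochain_def
proof (intro allI impI)
  fix xs ys :: "'a list" and u v
  assume len: "length xs + length ys + 1 = m + n - 1"
  then have len': "length xs + length ys + 1 + 1 = m + n" using n by linarith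
  show "brace m n f g (xs @ (u + v) # ys) = brace m n f g (xs @ u # ys) + brace m n f g (xs @ v # ys)"
    unfolding brace_ins sum.distrib[symmetric] sgnpow_add[symmetric]
    by (rule sum.cong[OF refl]) (simp add: ins_add[OF f g _ len'])
qed


definition eqon :: "nat \<Rightarrow> ('a list \<Rightarrow> 'b) \<Rightarrow> ('a list \<Rightarrow> 'b) \<Rightarrow> bool" where
  "eqon N f g \<longleftrightarrow> (\<forall>xs. length xs = N \<longrightarrow> f xs = g xs)"

lemma eqonD: "eqon N f g \<Longrightarrow> length xs = N \<Longrightarrow> f xs = g xs" by (simp add: eqon_def)
lemma eqonI: "(\<And>xs. length xs = N \<Longrightarrow> f xs = g xs) \<Longrightarrow> eqon N f g" by (simp add: eqon_def)

lemma brace_cong1: "eqon m f f' \<Longrightarrow> length xs + 1 = m + n \<Longrightarrow> brace m n f g xs = brace m n f' g xs"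
  unfolding brace_ins
  by (intro sum.cong refl arg_cong[where f="sgnpow _"] eqonD[of m f f']) (auto simp: ins_def)

lemma brace_cong2: "eqon n g g' \<Longrightarrow> length xs + 1 = m + n \<Longrightarrow> brace m n f g xs = brace m n f g' xs"
  unfolding brace_def
  by (intro sum.cong refl arg_cong[where f="sgnpow _"] arg_cong[where f=f]) (auto simp: eqon_def)

lemma hdiff_cong: "eqon N f f' \<Longrightarrow> length xs = Suc N \<Longrightarrow> hdiff N f xs = hdiff N f' xs"
  unfolding hdiff_def eqon_def by (auto intro!: sum.cong)

lemma cup_cong: "eqon a f f' \<Longrightarrow> eqon c g g' \<Longrightarrow> length xs = a + c \<Longrightarrow> cup a f g xs = cup a f' g' xs"
  unfolding cup_def eqon_def by auto

lemma ins_lin2: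
  assumes f: "hoch_cochain m f" and i: "i < m" and len: "length xs + 1 = m + n"
  shows "f (ins i n (\<lambda>ys. g1 ys + g2 ys) xs) = f (ins i n g1 xs) + f (ins i n g2 xs)"
    and "f (ins i n (\<lambda>ys. g1 ys - g2 ys) xs) = f (ins i n g1 xs) - f (ins i n g2 xs)"
    and "f (ins i n (\<lambda>ys. nsm k (g1 ys)) xs) = nsm k (f (ins i n g1 xs))"
    and "f (ins i n (\<lambda>ys. zsm c (g1 ys)) xs) = zsm c (f (ins i n g1 xs))"
    and "f (ins i n (\<lambda>ys. \<Sum>j\<in>A. h j ys) xs) = (\<Sum>j\<in>A. f (ins i n (h j) xs))"
  using i len unfolding ins_def
  by (auto intro!: hoch_add[OF f] hoch_diff[OF f] hoch_nsm[OF f] hoch_zsm[OF f] hoch_sum[OF f])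

lemma brace_lin2:
  assumes f: "hoch_cochain m f" and len: "length xs + 1 = m + n"
  shows "brace m n f (\<lambda>ys. g1 ys + g2 ys) xs = brace m n f g1 xs + brace m n f g2 xs"
    and "brace m n f (\<lambda>ys. g1 ys - g2 ys) xs = brace m n f g1 xs - brace m n f g2 xs"
    and "brace m n f (\<lambda>ys. nsm k (g1 ys)) xs = nsm k (brace m n f g1 xs)"
    and "brace m n f (\<lambda>ys. zsm c (g1 ys)) xs = zsm c (brace m n f g1 xs)"
    and "brace m n f (\<lambda>ys. \<Sum>j\<in>A. h j ys) xs = (\<Sum>j\<in>A. brace m n f (h j) xs)"
  unfolding brace_ins
  by (simp_all add: ins_lin2[OF f _ len] sum.distrib sgnpow_add sgnpow_diff sum_subtractf sgnpow_nsm nsm_sum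
        sgnpow_zsm zsm_sum sgnpow_sum flip: sum.swap[of _ A])

lemma brace_lin1:
  shows "brace m n (\<lambda>ys. f1 ys + f2 ys) g xs = brace m n f1 g xs + brace m n f2 g xs"
    and "brace m n (\<lambda>ys. f1 ys - f2 ys) g xs = brace m n f1 g xs - brace m n f2 g xs"
    and "brace m n (\<lambda>ys. - f1 ys) g xs = - brace m n f1 g xs"
    and "brace m n (\<lambda>ys. nsm k (f1 ys)) g xs = nsm k (brace m n f1 g xs)"
    and "brace m n (\<lambda>ys. zsm c (f1 ys)) g xs = zsm c (brace m n f1 g xs)"
    and "brace m n (\<lambda>ys. \<Sum>j\<in>A. h j ys) g xs = (\<Sum>j\<in>A. brace m n (h j) g xs)"
  unfolding brace_ins
  by (simp_all add: sum.distrib sgnpow_add sgnpow_diff sum_subtractf sgnpow_nsm nsm_sum sgnpow_neg sum_negf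
        sgnpow_zsm zsm_sum sgnpow_sum flip: sum.swap[of _ A])

lemma hdiff_lin:
  shows "hdiff N (\<lambda>ys. f1 ys + f2 ys) xs = hdiff N f1 xs + hdiff N f2 xs"
    and "hdiff N (\<lambda>ys. f1 ys - f2 ys) xs = hdiff N f1 xs - hdiff N f2 xs"
    and "hdiff N (\<lambda>ys. - f1 ys) xs = - hdiff N f1 xs"
    and "hdiff N (\<lambda>ys. \<Sum>j\<in>A. h j ys) xs = (\<Sum>j\<in>A. hdiff N (h j) xs)"
  unfolding hdiff_def
  by (simp_all add: sum.distrib sgnpow_add sgnpow_diff sum_subtractf sgnpow_neg sum_negf
        sgnpow_sum distrib_left distrib_right ring_distribs
        sum_distrib_left sum_distrib_right algebra_simps
        flip: sum.swap[of _ A])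

lemma hdiff_nsm: "hdiff N (\<lambda>ys. nsm k (f1 ys)) xs = nsm k (hdiff N f1 xs)"
  unfolding hdiff_def
  by (simp add: sgnpow_nsm nsm_sum nsm_add flip: nsm_mult_left nsm_mult_right)

lemma hdiff_zsm: "hdiff N (\<lambda>ys. zsm c (f1 ys)) xs = zsm c (hdiff N f1 xs)"
  unfolding hdiff_def
  by (simp add: sgnpow_zsm zsm_sum zsm_add flip: zsm_mult_left zsm_mult_right)

lemma cup_lin:
  shows "cup a (\<lambda>ys. f1 ys + f2 ys) g xs = cup a f1 g xs + cup a f2 g xs"
    and "cup a f (\<lambda>ys. g1 ys + g2 ys) xs = cup a f g1 xs + cup a f g2 xs"
  unfolding cup_def by (simp_all add: ring_distribs)


lemma sum_split_add: "(\<Sum>i<a + (c::nat). h i) = (\<Sum>i<a. h i) + (\<Sum>i<c. h (a + i) :: 'b::comm_monoid_add)"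
  by (induction c) (simp_all add: add.assoc)

lemma take_ins_lt: "i < a \<Longrightarrow> a + k \<le> length xs + 1 \<Longrightarrow> 1 \<le> k \<Longrightarrow>
   take a (ins i k g xs) = ins i k g (take (a + k - 1) xs)"
proof -
  assume h: "i < a" "a + k \<le> length xs + 1" "1 \<le> k"
  have 1: "take a (ins i k g xs) = take i xs @ g (take k (drop i xs)) # take (a - i - 1) (drop (i + k) xs)"
    using h by (simp add: ins_def take_Cons' min_def)
  have 2: "take i (take (a + k - 1) xs) = take i xs" using h by simp
  have 3: "take k (drop i (take (a + k - 1) xs)) = take k (drop i xs)" using h
    by (simp add: take_drop)
  have 4: "drop (i + k) (take (a + k - 1) xs) = take (a - i - 1) (drop (i + k) xs)" using h
    by (simp add: drop_take)
  show ?thesis using 1 2 3 4 by (simp add: ins_def)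
qed

lemma drop_ins_lt: "i < a \<Longrightarrow> a + k \<le> length xs + 1 \<Longrightarrow> 1 \<le> k \<Longrightarrow>
   drop a (ins i k g xs) = drop (a + k - 1) xs"
proof -
  assume h: "i < a" "a + k \<le> length xs + 1" "1 \<le> k"
  have "drop a (ins i k g xs) = drop (a - i - 1) (drop (i + k) xs)"
    using h by (simp add: ins_def drop_Cons')
  also have "\<dots> = drop (a + k - 1) xs" using h by simp
  finally show ?thesis .
qed

lemma take_ins_ge: "a \<le> length xs \<Longrightarrow> take a (ins (a + j) k g xs) = take a xs"
  by (simp add: ins_def min_def)

lemma drop_ins_ge: "a \<le> length xs \<Longrightarrow> drop a (ins (a + j) k g xs) = ins j k g (drop a xs)"
proof -
  assume h: "a \<le> length xs"
  have 1: "drop a (take (a + j) xs) = take j (drop a xs)" by (simp add: drop_take)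
  have 2: "drop (a + j) xs = drop j (drop a xs)" by (simp add: add.commute)
  have 3: "drop (a + j + k) xs = drop (j + k) (drop a xs)" by (simp add: add.commute add.left_commute)
  show ?thesis using h 1 2 3 by (simp add: ins_def)
qed

lemma leibniz:
  assumes n: "odd n" and len: "length xs + 1 = a + c + n"
  shows "brace (a + c) n (cup a f g) x xs =
         cup (a + n - 1) (brace a n f x) g xs + cup a f (brace c n g x) xs"
proof -
  have ev: "\<And>i. even ((n + 1) * i)" using n by simp
  have n1: "1 \<le> n" using n by (cases n) auto
  have A: "(\<Sum>i<a. cup a f g (ins i n x xs)) = cup (a + n - 1) (brace a n f x) g xs"
    unfolding cup_def brace_ins sum_distrib_right
    by (intro sum.cong refl) (use len n1 ev in \<open>simp add: take_ins_lt drop_ins_lt\<close>)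
  have B: "(\<Sum>i<c. cup a f g (ins (a + i) n x xs)) = cup a f (brace c n g x) xs"
    unfolding cup_def brace_ins sum_distrib_left
    by (intro sum.cong refl) (use len n1 ev in \<open>simp add: take_ins_ge drop_ins_ge\<close>)
  have "brace (a + c) n (cup a f g) x xs = (\<Sum>i<a + c. cup a f g (ins i n x xs))"
    unfolding brace_ins using ev by simp
  then show ?thesis unfolding sum_split_add A B .
qed


definition dins :: "nat \<Rightarrow> nat \<Rightarrow> ('a list \<Rightarrow> 'a) \<Rightarrow> nat \<Rightarrow> nat \<Rightarrow> ('a list \<Rightarrow> 'a) \<Rightarrow> 'a list \<Rightarrow> 'a list" where
  "dins i k g j l h xs = take i xs @ g (take k (drop i xs)) # take (j - i - k) (drop (i + k) xs)
      @ h (take l (drop j xs)) # drop (j + l) xs"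

lemma ins_ins_gt: "i + k \<le> j \<Longrightarrow> j + l \<le> length xs \<Longrightarrow>
   ins i k g (ins j l h xs) = dins i k g j l h xs"
proof -
  assume h1: "i + k \<le> j" and h2: "j + l \<le> length xs"
  have "ins j l h xs = take j xs @ h (take l (drop j xs)) # drop (j + l) xs" by (simp add: ins_def)
  moreover have "ins i k g (take j xs @ h (take l (drop j xs)) # drop (j + l) xs) =
     take i (take j xs) @ g (take k (drop i (take j xs))) # (drop (i + k) (take j xs) @ h (take l (drop j xs)) # drop (j + l) xs)"
    by (rule ins_after) (use h1 h2 in simp)
  moreover have "take i (take j xs) = take i xs" using h1 by simp
  moreover have "take k (drop i (take j xs)) = take k (drop i xs)" using h1 by (simp add: take_drop)
  moreover have "drop (i + k) (take j xs) = take (j - i - k) (drop (i + k) xs)" by (simp add: drop_take)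
  ultimately show ?thesis by (simp add: dins_def)
qed

lemma ins_ins_lt: "j < i \<Longrightarrow> i + k + l \<le> length xs + 1 \<Longrightarrow>
   ins i k g (ins j l h xs) = dins j l h (i + l - 1) k g xs"
proof -
  assume h1: "j < i" and h2: "i + k + l \<le> length xs + 1"
  have "ins j l h xs = take j xs @ h (take l (drop j xs)) # drop (j + l) xs" by (simp add: ins_def)
  moreover have "ins i k g (take j xs @ h (take l (drop j xs)) # drop (j + l) xs) =
     take j xs @ h (take l (drop j xs)) # ins (i - j - 1) k g (drop (j + l) xs)"
    using ins_before[of "take j xs" i k g] h1 h2 by simp
  moreover have "ins (i - j - 1) k g (drop (j + l) xs) =
      take (i - j - 1) (drop (j + l) xs) @ g (take k (drop (i + l - 1) xs)) # drop (i + l - 1 + k) xs"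
    using h1 h2 by (simp add: ins_def add.commute add.left_commute)
  ultimately show ?thesis using h1 by (simp add: dins_def)
qed

lemma ins_ins_in: "i \<le> j \<Longrightarrow> j < i + k \<Longrightarrow> i + k + l \<le> length xs + 1 \<Longrightarrow>
   ins i k g (ins j l h xs) = ins i (k + l - 1) (\<lambda>ys. g (ins (j - i) l h ys)) xs"
proof -
  assume h1: "i \<le> j" and h3: "j < i + k" and h2: "i + k + l \<le> length xs + 1"
  have "ins j l h xs = take j xs @ h (take l (drop j xs)) # drop (j + l) xs" by (simp add: ins_def)
  moreover have "ins i k g (take j xs @ h (take l (drop j xs)) # drop (j + l) xs) =
     take i (take j xs) @ g (drop i (take j xs) @ h (take l (drop j xs)) # take (i + k - length (take j xs) - 1) (drop (j + l) xs))
       # drop (i + k - length (take j xs) - 1) (drop (j + l) xs)"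
    by (rule ins_inside) (use h1 h2 h3 in simp_all)
  moreover have "length (take j xs) = j" using h1 h2 h3 by simp
  moreover have "ins (j - i) l h (take (k + l - 1) (drop i xs)) =
     drop i (take j xs) @ h (take l (drop j xs)) # take (i + k - j - 1) (drop (j + l) xs)"
  proof -
    let ?B = "take (k + l - 1) (drop i xs)"
    have a: "take (j - i) ?B = drop i (take j xs)" using h1 h3 by (simp add: drop_take min_def)
    have b0: "drop (j - i) ?B = take (k + l - 1 - (j - i)) (drop j xs)" using h1 by (simp add: drop_take)
    have b: "take l (drop (j - i) ?B) = take l (drop j xs)" unfolding b0 using h1 h3 by (simp add: min_def)
    have c0: "drop (j - i + l) ?B = take (k + l - 1 - (j - i + l)) (drop (j - i + l) (drop i xs))"
      by (simp only: drop_take)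
    have c1: "drop (j - i + l) (drop i xs) = drop (j + l) xs" using h1 by simp
    have c2: "k + l - 1 - (j - i + l) = i + k - j - 1" using h1 h3 by simp
    show ?thesis unfolding ins_def a b c0 c1 c2 ..
  qed
  moreover have "drop (i + k - j - 1) (drop (j + l) xs) = drop (i + (k + l - 1)) xs"
    using h1 h2 h3 by simp
  ultimately show ?thesis using h1 h2 h3 by (simp add: ins_def)
qed

lemma ins_sgn:
  assumes f: "hoch_cochain m f" and i: "i < m" and len: "length xs + 1 = m + n"
  shows "f (ins i n (\<lambda>ys. sgnpow c (g1 ys)) xs) = sgnpow c (f (ins i n g1 xs))"
  using i len unfolding ins_def by (auto intro!: hoch_sgnpow[OF f])

lemma brace_fun: "brace m n f g = (\<lambda>xs. \<Sum>i<m. sgnpow ((n + 1) * i) (f (ins i n g xs)))"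
  by (rule ext) (rule brace_ins)

lemma brace_brace_inside:
  assumes z: "hoch_cochain a z" and k: "1 \<le> k1" "1 \<le> k2" and len: "length xs + 2 = a + k1 + k2"
  shows "(\<Sum>(j, i)\<in>{(j, i). i < a \<and> i \<le> j \<and> j < i + k1}.
            sgnpow ((k2 + 1) * j) (sgnpow ((k1 + 1) * i) (z (ins i k1 g (ins j k2 h xs)))))
       = brace a (k1 + k2 - 1) z (brace k1 k2 g h) xs"
proof -
  let ?K = "k1 + k2 - 1"
  have len': "length xs + 1 = a + ?K" using len k by linarith
  have "brace a ?K z (brace k1 k2 g h) xs =
     (\<Sum>i<a. sgnpow ((?K + 1) * i) (\<Sum>l<k1. sgnpow ((k2 + 1) * l) (z (ins i ?K (\<lambda>ys. g (ins l k2 h ys)) xs))))"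
    unfolding brace_ins[of a] brace_fun[of k1]
  proof (intro sum.cong refl arg_cong[where f="sgnpow _"])
    fix i assume i: "i \<in> {..<a}"
    show "z (ins i ?K (\<lambda>xs. \<Sum>l<k1. sgnpow ((k2 + 1) * l) (g (ins l k2 h xs))) xs) =
      (\<Sum>l<k1. sgnpow ((k2 + 1) * l) (z (ins i ?K (\<lambda>ys. g (ins l k2 h ys)) xs)))"
    proof -
      have "z (ins i ?K (\<lambda>xs. \<Sum>l<k1. sgnpow ((k2 + 1) * l) (g (ins l k2 h xs))) xs) =
        (\<Sum>l<k1. z (ins i ?K (\<lambda>ys. sgnpow ((k2 + 1) * l) (g (ins l k2 h ys))) xs))"
        by (rule ins_lin2(5)[OF z _ len']) (use i in simp)
      also have "\<dots> = (\<Sum>l<k1. sgnpow ((k2 + 1) * l) (z (ins i ?K (\<lambda>ys. g (ins l k2 h ys)) xs)))"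
        by (intro sum.cong refl ins_sgn[OF z _ len']) (use i in simp)
      finally show ?thesis .
    qed
  qed
  also have "\<dots> = (\<Sum>(i, l)\<in>{..<a} \<times> {..<k1}. sgnpow ((?K + 1) * i) (sgnpow ((k2 + 1) * l) (z (ins i ?K (\<lambda>ys. g (ins l k2 h ys)) xs))))"
    by (simp add: sgnpow_sum sum.cartesian_product)
  also have "\<dots> = (\<Sum>(j, i)\<in>{(j, i). i < a \<and> i \<le> j \<and> j < i + k1}.
            sgnpow ((k2 + 1) * j) (sgnpow ((k1 + 1) * i) (z (ins i k1 g (ins j k2 h xs)))))"
  proof (rule sum.reindex_bij_witness[where i="\<lambda>(j, i). (i, j - i)" and j="\<lambda>(i, l). (i + l, i)"])
    fix p assume "p \<in> {(j, i). i < a \<and> i \<le> j \<and> j < i + k1}"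
    then show "(case (case p of (j, i) \<Rightarrow> (i, j - i)) of (i, l) \<Rightarrow> (i + l, i)) = p"
      and "(case p of (j, i) \<Rightarrow> (i, j - i)) \<in> {..<a} \<times> {..<k1}" by auto
  next
    fix p assume "p \<in> {..<a} \<times> {..<k1}"
    then show "(case (case p of (i, l) \<Rightarrow> (i + l, i)) of (j, i) \<Rightarrow> (i, j - i)) = p"
      and "(case p of (i, l) \<Rightarrow> (i + l, i)) \<in> {(j, i). i < a \<and> i \<le> j \<and> j < i + k1}" by auto
  next
    fix p assume p: "p \<in> {..<a} \<times> {..<k1}"
    obtain i l where pe: "p = (i, l)" by (cases p)
    have il: "i < a" "l < k1" using p pe by auto
    have e: "ins i k1 g (ins (i + l) k2 h xs) = ins i ?K (\<lambda>ys. g (ins l k2 h ys)) xs"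
      using ins_ins_in[of i "i + l" k1 k2 xs g h] il len by simp
    have par: "even ((k2 + 1) * (i + l) + (k1 + 1) * i) = even ((?K + 1) * i + (k2 + 1) * l)"
    proof -
      have e: "(k2 + 1) * (i + l) + (k1 + 1) * i = (?K + 1) * i + (k2 + 1) * l + 2 * i"
        using k by (simp add: algebra_simps)
      show ?thesis unfolding e by (simp only: even_add even_mult_iff even_numeral simp_thms)
    qed
    show "(case (case p of (i, l) \<Rightarrow> (i + l, i)) of (j, i) \<Rightarrow> sgnpow ((k2 + 1) * j) (sgnpow ((k1 + 1) * i) (z (ins i k1 g (ins j k2 h xs))))) =
      (case p of (i, l) \<Rightarrow> sgnpow ((?K + 1) * i) (sgnpow ((k2 + 1) * l) (z (ins i ?K (\<lambda>ys. g (ins l k2 h ys)) xs))))"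
      unfolding pe by (simp only: prod.case e sgnpow_sgnpow sgnpow_cong[OF par])
  qed
  finally show ?thesis by simp
qed

lemma brace_brace_decomp:
  assumes z: "hoch_cochain a z" and k: "1 \<le> k1" "1 \<le> k2" and len: "length xs + 2 = a + k1 + k2"
  shows "brace (a + k1 - 1) k2 (brace a k1 z g) h xs =
     brace a (k1 + k2 - 1) z (brace k1 k2 g h) xs
   + (\<Sum>(j, i)\<in>{(j, i). j < i \<and> i < a}. sgnpow ((k2 + 1) * j) (sgnpow ((k1 + 1) * i) (z (dins j k2 h (i + k2 - 1) k1 g xs))))
   + (\<Sum>(j, i)\<in>{(j, i). i < a \<and> i + k1 \<le> j \<and> j < a + k1 - 1}. sgnpow ((k2 + 1) * j) (sgnpow ((k1 + 1) * i) (z (dins i k1 g j k2 h xs))))"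
proof -
  define F where "F = (\<lambda>(j, i). sgnpow ((k2 + 1) * j) (sgnpow ((k1 + 1) * i) (z (ins i k1 g (ins j k2 h xs)))))"
  define IN where "IN = {(j, i). i < a \<and> i \<le> j \<and> j < i + k1}"
  define LT where "LT = {(j, i). j < i \<and> i < a}"
  define GT where "GT = {(j, i). i < a \<and> i + k1 \<le> j \<and> j < a + k1 - 1}"
  have fin: "finite IN" "finite LT" "finite GT"
  proof -
    have "IN \<subseteq> {..<a + k1} \<times> {..<a}" "LT \<subseteq> {..<a} \<times> {..<a}" "GT \<subseteq> {..<a + k1} \<times> {..<a}"
      unfolding IN_def LT_def GT_def by auto
    then show "finite IN" "finite LT" "finite GT" by (auto intro: finite_subset)
  qed
  have split: "{..<a + k1 - 1} \<times> {..<a} = IN \<union> LT \<union> GT"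
    unfolding IN_def LT_def GT_def using k by auto
  have disj: "IN \<inter> LT = {}" "(IN \<union> LT) \<inter> GT = {}" unfolding IN_def LT_def GT_def by auto
  have "brace (a + k1 - 1) k2 (brace a k1 z g) h xs = (\<Sum>p\<in>{..<a + k1 - 1} \<times> {..<a}. F p)"
    unfolding brace_ins F_def by (simp add: sgnpow_sum sum.cartesian_product)
  also have "\<dots> = sum F IN + sum F LT + sum F GT"
    unfolding split using fin disj by (simp add: sum.union_disjoint)
  also have "sum F IN = brace a (k1 + k2 - 1) z (brace k1 k2 g h) xs"
    unfolding F_def IN_def by (rule brace_brace_inside[OF z k len])
  also have "sum F LT = (\<Sum>(j, i)\<in>LT. sgnpow ((k2 + 1) * j) (sgnpow ((k1 + 1) * i) (z (dins j k2 h (i + k2 - 1) k1 g xs))))"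
    unfolding F_def
  proof (intro sum.cong refl)
    fix p assume "p \<in> LT"
    then obtain j i where p: "p = (j, i)" "j < i" "i < a" unfolding LT_def by auto
    have "ins i k1 g (ins j k2 h xs) = dins j k2 h (i + k2 - 1) k1 g xs"
      by (rule ins_ins_lt) (use p len in simp_all)
    then show "(case p of (j, i) \<Rightarrow> sgnpow ((k2 + 1) * j) (sgnpow ((k1 + 1) * i) (z (ins i k1 g (ins j k2 h xs))))) =
      (case p of (j, i) \<Rightarrow> sgnpow ((k2 + 1) * j) (sgnpow ((k1 + 1) * i) (z (dins j k2 h (i + k2 - 1) k1 g xs))))"
      using p by simp
  qed
  also have "sum F GT = (\<Sum>(j, i)\<in>GT. sgnpow ((k2 + 1) * j) (sgnpow ((k1 + 1) * i) (z (dins i k1 g j k2 h xs))))"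
    unfolding F_def
  proof (intro sum.cong refl)
    fix p assume "p \<in> GT"
    then obtain j i where p: "p = (j, i)" "i < a" "i + k1 \<le> j" "j < a + k1 - 1" unfolding GT_def by auto
    have "ins i k1 g (ins j k2 h xs) = dins i k1 g j k2 h xs"
      by (rule ins_ins_gt) (use p len in simp_all)
    then show "(case p of (j, i) \<Rightarrow> sgnpow ((k2 + 1) * j) (sgnpow ((k1 + 1) * i) (z (ins i k1 g (ins j k2 h xs))))) =
      (case p of (j, i) \<Rightarrow> sgnpow ((k2 + 1) * j) (sgnpow ((k1 + 1) * i) (z (dins i k1 g j k2 h xs))))"
      using p by simp
  qed
  finally show ?thesis unfolding LT_def GT_def .
qed

lemma prelie:
  assumes z: "hoch_cochain a z" and n: "odd n" and m: "1 \<le> m" and len: "length xs + 2 = a + n + m"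
  shows "brace (a + n - 1) m (brace a n z x) y xs - brace a (n + m - 1) z (brace n m x y) xs =
         brace (a + m - 1) n (brace a m z y) x xs - brace a (m + n - 1) z (brace m n y x) xs"
proof -
  have n1: "1 \<le> n" using n by (cases n) auto
  have ev: "\<And>i. even ((n + 1) * i)" using n by simp
  have len2: "length xs + 2 = a + m + n" using len by simp
  note D1 = brace_brace_decomp[OF z n1 m len, of x y]
  note D2 = brace_brace_decomp[OF z m n1 len2, of y x]
  have E1: "(\<Sum>(j, i)\<in>{(j, i). j < i \<and> i < a}. sgnpow ((m + 1) * j) (sgnpow ((n + 1) * i) (z (dins j m y (i + m - 1) n x xs))))
     = (\<Sum>(j, i)\<in>{(j, i). i < a \<and> i + m \<le> j \<and> j < a + m - 1}. sgnpow ((n + 1) * j) (sgnpow ((m + 1) * i) (z (dins i m y j n x xs))))"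
  proof (rule sum.reindex_bij_witness[where i="\<lambda>(j, i). (i, j - m + 1)" and j="\<lambda>(j, i). (i + m - 1, j)"])
    fix p assume "p \<in> {(j, i). j < i \<and> i < a}"
    then show "(case (case p of (j, i) \<Rightarrow> (i + m - 1, j)) of (j, i) \<Rightarrow> (i, j - m + 1)) = p"
      and "(case p of (j, i) \<Rightarrow> (i + m - 1, j)) \<in> {(j, i). i < a \<and> i + m \<le> j \<and> j < a + m - 1}"
      using m by auto
  next
    fix p assume "p \<in> {(j, i). i < a \<and> i + m \<le> j \<and> j < a + m - 1}"
    then show "(case (case p of (j, i) \<Rightarrow> (i, j - m + 1)) of (j, i) \<Rightarrow> (i + m - 1, j)) = p"
      and "(case p of (j, i) \<Rightarrow> (i, j - m + 1)) \<in> {(j, i). j < i \<and> i < a}"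
      using m by auto
  next
    fix p assume "p \<in> {(j, i). j < i \<and> i < a}"
    then obtain j i where p: "p = (j, i)" by auto
    show "(case (case p of (j, i) \<Rightarrow> (i + m - 1, j)) of (j, i) \<Rightarrow> sgnpow ((n + 1) * j) (sgnpow ((m + 1) * i) (z (dins i m y j n x xs)))) =
      (case p of (j, i) \<Rightarrow> sgnpow ((m + 1) * j) (sgnpow ((n + 1) * i) (z (dins j m y (i + m - 1) n x xs))))"
      unfolding p using ev by simp
  qed
  have E2: "(\<Sum>(j, i)\<in>{(j, i). i < a \<and> i + n \<le> j \<and> j < a + n - 1}. sgnpow ((m + 1) * j) (sgnpow ((n + 1) * i) (z (dins i n x j m y xs))))
     = (\<Sum>(j, i)\<in>{(j, i). j < i \<and> i < a}. sgnpow ((n + 1) * j) (sgnpow ((m + 1) * i) (z (dins j n x (i + n - 1) m y xs))))"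
  proof (rule sum.reindex_bij_witness[where i="\<lambda>(j, i). (i + n - 1, j)" and j="\<lambda>(j, i). (i, j - n + 1)"])
    fix p assume "p \<in> {(j, i). i < a \<and> i + n \<le> j \<and> j < a + n - 1}"
    then show "(case (case p of (j, i) \<Rightarrow> (i, j - n + 1)) of (j, i) \<Rightarrow> (i + n - 1, j)) = p"
      and "(case p of (j, i) \<Rightarrow> (i, j - n + 1)) \<in> {(j, i). j < i \<and> i < a}"
      using n1 by auto
  next
    fix p assume "p \<in> {(j, i). j < i \<and> i < a}"
    then show "(case (case p of (j, i) \<Rightarrow> (i + n - 1, j)) of (j, i) \<Rightarrow> (i, j - n + 1)) = p"
      and "(case p of (j, i) \<Rightarrow> (i + n - 1, j)) \<in> {(j, i). i < a \<and> i + n \<le> j \<and> j < a + n - 1}"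
      using n1 by auto
  next
    fix p assume "p \<in> {(j, i). i < a \<and> i + n \<le> j \<and> j < a + n - 1}"
    then obtain j i where p: "p = (j, i)" "i + n \<le> j" by auto
    have e: "j - n + 1 + n - 1 = j" using p n1 by simp
    have par: "even ((m + 1) * (j - n + 1)) = even ((m + 1) * j)"
    proof -
      have jj: "j = (j - n + 1) + (n - 1)" using p n1 by simp
      have "(m + 1) * j = (m + 1) * (j - n + 1) + (m + 1) * (n - 1)"
        by (subst jj) (simp only: add_mult_distrib2)
      moreover have "even (n - 1)" using n n1 by simp
      ultimately show ?thesis by simp
    qed
    show "(case (case p of (j, i) \<Rightarrow> (i, j - n + 1)) of (j, i) \<Rightarrow> sgnpow ((n + 1) * j) (sgnpow ((m + 1) * i) (z (dins j n x (i + n - 1) m y xs)))) =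
      (case p of (j, i) \<Rightarrow> sgnpow ((m + 1) * j) (sgnpow ((n + 1) * i) (z (dins i n x j m y xs))))"
      unfolding p(1) using ev by (simp only: prod.case e sgnpow_even sgnpow_cong[OF par])
  qed
  show ?thesis unfolding D1 D2 E1 E2 by (simp add: algebra_simps)
qed


definition ctr :: "nat \<Rightarrow> 'a::ring list \<Rightarrow> 'a list" where
  "ctr k xs = take (k - 1) xs @ (xs ! (k - 1) * xs ! k) # drop (k + 1) xs"

lemma hdiff_ctr: "hdiff N F xs = xs ! 0 * F (drop 1 xs) + (\<Sum>k\<in>{1..N}. sgnpow k (F (ctr k xs)))
    + sgnpow (N + 1) (F (take N xs) * xs ! N)"
  by (simp add: hdiff_def ctr_def)

lemma l1: "1 \<le> n \<Longrightarrow> n \<le> length xs \<Longrightarrow> ins 0 n g xs ! 0 = g (take n xs) \<and> drop 1 (ins 0 n g xs) = drop n xs"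
  by (simp add: ins_def)

lemma l2: "1 \<le> i \<Longrightarrow> i + n \<le> length xs \<Longrightarrow>
   ins i n g xs ! 0 = xs ! 0 \<and> drop 1 (ins i n g xs) = ins (i - 1) n g (drop 1 xs)"
proof -
  assume h: "1 \<le> i" "i + n \<le> length xs"
  then obtain i' where i: "i = Suc i'" by (cases i) auto
  obtain a ys where xs: "xs = a # ys" using h by (cases xs) auto
  show ?thesis unfolding i xs by (simp add: ins_def)
qed

lemma l3: "i < m \<Longrightarrow> length xs = m + n \<Longrightarrow> 1 \<le> n \<Longrightarrow>
   ins i n g xs ! m = xs ! (m + n - 1)"
  by (simp add: ins_def nth_append add.commute)

lemma l4: "length xs = m + n \<Longrightarrow>
   take m (ins m n g xs) = take m xs \<and> ins m n g xs ! m = g (drop m xs)"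
  by (simp add: ins_def nth_append)

lemma ctr_app: "length P + 1 = k \<Longrightarrow> ctr k (P @ u # v # R) = P @ (u * v) # R"
  by (auto simp: ctr_def nth_append)

lemma decomp3: "1 \<le> k \<Longrightarrow> k < length xs \<Longrightarrow>
   xs = take (k - 1) xs @ xs ! (k - 1) # xs ! k # drop (k + 1) xs"
proof -
  assume h: "1 \<le> k" "k < length xs"
  have "xs = take (k - 1) xs @ drop (k - 1) xs" by simp
  also have "drop (k - 1) xs = xs ! (k - 1) # drop k xs" using h Cons_nth_drop_Suc[of "k - 1" xs] by simp
  also have "drop k xs = xs ! k # drop (k + 1) xs" using h by (simp add: Cons_nth_drop_Suc)
  finally show ?thesis .
qed

lemma decomp2: "k < length xs \<Longrightarrow> xs = take k xs @ xs ! k # drop (k + 1) xs"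
  by (simp add: id_take_nth_drop)

lemma l5: "1 \<le> k \<Longrightarrow> k < i \<Longrightarrow> i + n \<le> length xs \<Longrightarrow>
   ctr k (ins i n g xs) = ins (i - 1) n g (ctr k xs)"
proof -
  assume h: "1 \<le> k" "k < i" "i + n \<le> length xs"
  define P where "P = take (k - 1) xs"
  define R where "R = drop (k + 1) xs"
  have lP: "length P = k - 1" using h by (simp add: P_def)
  have xs: "xs = P @ xs ! (k - 1) # xs ! k # R" unfolding P_def R_def by (rule decomp3) (use h in auto)
  have A: "ins i n g xs = P @ xs ! (k - 1) # xs ! k # ins (i - k - 1) n g R"
  proof -
    have "ins i n g xs = P @ xs ! (k - 1) # ins (i - length P - 1) n g (xs ! k # R)"
      by (subst xs, rule ins_before) (use lP h in simp)
    also have "ins (i - length P - 1) n g (xs ! k # R) = xs ! k # ins (i - k - 1) n g R"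
      using ins_before[of "[]" "i - length P - 1" n g "xs ! k" R] lP h by simp
    finally show ?thesis .
  qed
  have B: "ins (i - 1) n g (P @ (xs ! (k - 1) * xs ! k) # R) = P @ (xs ! (k - 1) * xs ! k) # ins (i - k - 1) n g R"
    by (subst ins_before) (use lP h in simp_all)
  have C: "ctr k xs = P @ (xs ! (k - 1) * xs ! k) # R" by (subst xs, rule ctr_app) (use lP h in simp)
  show ?thesis unfolding A C B by (rule ctr_app) (use lP h in simp)
qed

lemma l6: "i + 2 \<le> k \<Longrightarrow> k \<le> m \<Longrightarrow> length xs = m + n \<Longrightarrow> 1 \<le> n \<Longrightarrow>
   ctr k (ins i n g xs) = ins i n g (ctr (k + n - 1) xs)"
proof -
  assume h: "i + 2 \<le> k" "k \<le> m" "length xs = m + n" "1 \<le> n"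
  define K where "K = k + n - 1"
  define P where "P = take (K - 1) xs"
  define R where "R = drop (K + 1) xs"
  have lP: "length P = K - 1" using h by (simp add: P_def K_def)
  have xs: "xs = P @ xs ! (K - 1) # xs ! K # R" unfolding P_def R_def by (rule decomp3) (use h in \<open>auto simp: K_def\<close>)
  have A: "ins i n g xs = take i P @ g (take n (drop i P)) # (drop (i + n) P @ xs ! (K - 1) # xs ! K # R)"
    by (subst xs, rule ins_after) (use lP h in \<open>simp add: K_def\<close>)
  have C: "ctr K xs = P @ (xs ! (K - 1) * xs ! K) # R" by (subst xs, rule ctr_app) (use lP h in \<open>simp add: K_def\<close>)
  have B: "ins i n g (P @ (xs ! (K - 1) * xs ! K) # R) = take i P @ g (take n (drop i P)) # (drop (i + n) P @ (xs ! (K - 1) * xs ! K) # R)"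
    by (rule ins_after) (use lP h in \<open>simp add: K_def\<close>)
  show ?thesis unfolding K_def[symmetric] A C B
    using ctr_app[of "take i P @ g (take n (drop i P)) # drop (i + n) P" k "xs ! (K - 1)" "xs ! K" R] lP h
    by (simp add: K_def)
qed

lemma l7: "1 \<le> k \<Longrightarrow> k \<le> n \<Longrightarrow> i + n + 1 \<le> length xs \<Longrightarrow>
   ins i n g (ctr (i + k) xs) = take i xs @ g (ctr k (take (n + 1) (drop i xs))) # drop (i + n + 1) xs"
proof -
  assume h: "1 \<le> k" "k \<le> n" "i + n + 1 \<le> length xs"
  define P where "P = take (i + k - 1) xs"
  define R where "R = drop (i + k + 1) xs"
  define u where "u = xs ! (i + k - 1)"
  define v where "v = xs ! (i + k)"
  have lP: "length P = i + k - 1" using h by (simp add: P_def)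
  have xs: "xs = P @ u # v # R" unfolding P_def R_def u_def v_def by (rule decomp3) (use h in auto)
  have C: "ctr (i + k) xs = P @ (u * v) # R" by (subst xs, rule ctr_app) (use lP h in simp)
  have A: "ins i n g (P @ (u * v) # R) = take i P @ g (drop i P @ (u * v) # take (i + n - length P - 1) R) # drop (i + n - length P - 1) R"
    by (rule ins_inside) (use lP h xs in \<open>simp_all\<close>)
  have D: "take (n + 1) (drop i xs) = drop i P @ u # v # take (n - k) R"
  proof -
    have "drop i xs = drop i P @ u # v # R" using lP h by (subst xs) (simp add: drop_append)
    moreover have "length (drop i P) = k - 1" using lP h by simp
    ultimately show ?thesis using lP h by (simp add: take_Cons')
  qed
  have E: "ctr k (drop i P @ u # v # take (n - k) R) = drop i P @ (u * v) # take (n - k) R"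
    by (rule ctr_app) (use lP h in simp)
  have F: "drop (i + n + 1) xs = drop (n - k) R"
  proof -
    have "drop (i + n + 1) xs = drop (Suc (Suc (n - k))) (u # v # R)" using lP h by (subst xs) (simp add: drop_append Suc_diff_le)
    then show ?thesis by simp
  qed
  have G: "take i xs = take i P" using lP h by (subst xs) (simp add: take_append)
  have H: "i + n - length P - 1 = n - k" using lP h by simp
  show ?thesis unfolding C A D E F G H ..
qed

lemma l8: "i + 1 + n \<le> length xs \<Longrightarrow>
   ctr (i + 1) (ins (i + 1) n g xs) = take i xs @ (xs ! i * g (take n (drop (i + 1) xs))) # drop (i + 1 + n) xs"
proof -
  assume h: "i + 1 + n \<le> length xs"
  have xs: "xs = take i xs @ xs ! i # drop (i + 1) xs" by (rule decomp2) (use h in simp)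
  have "ins (i + 1) n g xs = take i xs @ xs ! i # ins 0 n g (drop (i + 1) xs)"
    by (subst xs, subst ins_before) (use h in simp_all)
  also have "ins 0 n g (drop (i + 1) xs) = g (take n (drop (i + 1) xs)) # drop (i + 1 + n) xs"
    by (simp add: ins_def add.commute)
  finally have A: "ins (i + 1) n g xs = take i xs @ xs ! i # g (take n (drop (i + 1) xs)) # drop (i + 1 + n) xs" .
  show ?thesis unfolding A by (rule ctr_app) (use h in simp)
qed

lemma l9: "i + n + 1 \<le> length xs \<Longrightarrow>
   ctr (i + 1) (ins i n g xs) = take i xs @ (g (take n (drop i xs)) * xs ! (i + n)) # drop (i + n + 1) xs"
proof -
  assume h: "i + n + 1 \<le> length xs"
  have "drop (i + n) xs = xs ! (i + n) # drop (i + n + 1) xs" using h Cons_nth_drop_Suc[of "i + n" xs] by simp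
  then have A: "ins i n g xs = take i xs @ g (take n (drop i xs)) # xs ! (i + n) # drop (i + n + 1) xs"
    by (simp add: ins_def)
  show ?thesis unfolding A by (rule ctr_app) (use h in simp)
qed


lemma homo_T:
  assumes m: "odd m" and n: "odd n" and len: "length xs = m + n"
  shows "hdiff (m + n - 1) (brace m n f g) xs =
     xs ! 0 * (\<Sum>i<m. f (ins i n g (drop 1 xs)))
   + (\<Sum>(K, i)\<in>{1..m + n - 1} \<times> {..<m}. sgnpow K (f (ins i n g (ctr K xs))))
   + (\<Sum>i<m. f (ins i n g (take (m + n - 1) xs))) * xs ! (m + n - 1)"
proof -
  have ev: "\<And>i. even ((n + 1) * i)" using n by simp
  have ev2: "even (m + n - 1 + 1)" using m n by (cases m) auto
  show ?thesis unfolding hdiff_ctr brace_ins using ev ev2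
    by (simp add: sgnpow_sum sum.cartesian_product)
qed

lemma homo_R1:
  assumes m: "odd m" and n: "odd n" and len: "length xs = m + n"
  shows "brace (m + 1) n (hdiff m f) g xs =
     cup n g f xs + xs ! 0 * (\<Sum>i<m. f (ins i n g (drop 1 xs)))
   + (\<Sum>(i, k)\<in>{..<m + 1} \<times> {1..m}. sgnpow k (f (ctr k (ins i n g xs))))
   + (\<Sum>i<m. f (ins i n g (take (m + n - 1) xs))) * xs ! (m + n - 1) + cup m f g xs"
proof -
  have ev: "\<And>i. even ((n + 1) * i)" using n by simp
  have ev2: "even (m + 1)" using m by simp
  have m1: "1 \<le> m" and n1: "1 \<le> n" using m n by (cases m; simp; cases n; simp)+
  define A where "A = (\<lambda>i. ins i n g xs ! 0 * f (drop 1 (ins i n g xs)))"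
  define C where "C = (\<lambda>i. f (take m (ins i n g xs)) * ins i n g xs ! m)"
  have "brace (m + 1) n (hdiff m f) g xs = (\<Sum>i<m + 1. A i + (\<Sum>k\<in>{1..m}. sgnpow k (f (ctr k (ins i n g xs)))) + C i)"
    unfolding brace_ins hdiff_ctr A_def C_def using ev ev2 by simp
  also have "\<dots> = (\<Sum>i<m + 1. A i) + (\<Sum>(i, k)\<in>{..<m + 1} \<times> {1..m}. sgnpow k (f (ctr k (ins i n g xs)))) + (\<Sum>i<m + 1. C i)"
    by (simp add: sum.distrib sum.cartesian_product)
  also have "(\<Sum>i<m + 1. A i) = cup n g f xs + xs ! 0 * (\<Sum>i<m. f (ins i n g (drop 1 xs)))"
  proof -
    have "(\<Sum>i<m + 1. A i) = A 0 + (\<Sum>i<m. A (Suc i))" by (simp add: sum.lessThan_Suc_shift del: sum.lessThan_Suc)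
    moreover have "A 0 = cup n g f xs" using l1[of n xs g] n1 len by (simp add: A_def cup_def ins_def)
    moreover have "A (Suc i) = xs ! 0 * f (ins i n g (drop 1 xs))" if "i < m" for i
      using l2[of "Suc i" n xs g] that len by (simp add: A_def)
    ultimately show ?thesis by (simp add: sum_distrib_left)
  qed
  also have "(\<Sum>i<m + 1. C i) = (\<Sum>i<m. f (ins i n g (take (m + n - 1) xs))) * xs ! (m + n - 1) + cup m f g xs"
  proof -
    have "(\<Sum>i<m + 1. C i) = (\<Sum>i<m. C i) + C m" by simp
    moreover have "C m = cup m f g xs" using l4[OF len, of g] by (simp add: C_def cup_def)
    moreover have "C i = f (ins i n g (take (m + n - 1) xs)) * xs ! (m + n - 1)" if "i < m" for i
      using take_ins_lt[of i m n xs g] l3[OF that len n1, of g] that len n1 by (simp add: C_def)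
    ultimately show ?thesis by (simp add: sum_distrib_right)
  qed
  finally show ?thesis by (simp add: add.assoc)
qed

lemma homo_R2:
  assumes f: "hoch_cochain m f" and m: "odd m" and n: "odd n" and len: "length xs = m + n"
  shows "brace m (n + 1) f (hdiff n g) xs =
     (\<Sum>i<m. sgnpow i (f (take i xs @ (xs ! i * g (take n (drop (i + 1) xs))) # drop (i + 1 + n) xs)))
   + (\<Sum>(i, k)\<in>{..<m} \<times> {1..n}. sgnpow i (sgnpow k (f (take i xs @ g (ctr k (take (n + 1) (drop i xs))) # drop (i + n + 1) xs))))
   + (\<Sum>i<m. sgnpow i (f (take i xs @ (g (take n (drop i xs)) * xs ! (i + n)) # drop (i + n + 1) xs)))"
proof -
  have par: "\<And>i. even ((n + 1 + 1) * i) = even i" using n by simp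
  have ev2: "even (n + 1)" using n by simp
  have "brace m (n + 1) f (hdiff n g) xs = (\<Sum>i<m. sgnpow i (f (take i xs @ hdiff n g (take (n + 1) (drop i xs)) # drop (i + (n + 1)) xs)))"
    unfolding brace_def by (intro sum.cong refl) (simp only: sgnpow_cong[OF par])
  also have "\<dots> = (\<Sum>i<m. sgnpow i (f (take i xs @ (xs ! i * g (take n (drop (i + 1) xs))) # drop (i + 1 + n) xs)
      + (\<Sum>k\<in>{1..n}. sgnpow k (f (take i xs @ g (ctr k (take (n + 1) (drop i xs))) # drop (i + n + 1) xs)))
      + f (take i xs @ (g (take n (drop i xs)) * xs ! (i + n)) # drop (i + n + 1) xs)))"
  proof (intro sum.cong refl arg_cong[where f="sgnpow _"])
    fix i assume i: "i \<in> {..<m}"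
    let ?c = "take (n + 1) (drop i xs)"
    have l: "length (take i xs) + length (drop (i + (n + 1)) xs) + 1 = m" using i len by auto
    have c0: "?c ! 0 = xs ! i" using i len by simp
    have c1: "drop 1 ?c = take n (drop (i + 1) xs)" using i len by (simp add: drop_take)
    have c2: "take n ?c = take n (drop i xs)" by simp
    have c3: "?c ! n = xs ! (i + n)" using i len by simp
    have e: "i + (n + 1) = i + 1 + n" "i + (n + 1) = i + n + 1" by simp_all
    have "hdiff n g ?c = ?c ! 0 * g (drop 1 ?c) + (\<Sum>k\<in>{1..n}. sgnpow k (g (ctr k ?c))) + g (take n ?c) * ?c ! n"
      unfolding hdiff_ctr using ev2 by simp
    note hd = this[unfolded c0 c1 c2 c3]
    have "f (take i xs @ hdiff n g ?c # drop (i + (n + 1)) xs) =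
      f (take i xs @ (xs ! i * g (take n (drop (i + 1) xs))) # drop (i + (n + 1)) xs)
      + (\<Sum>k\<in>{1..n}. sgnpow k (f (take i xs @ g (ctr k ?c) # drop (i + (n + 1)) xs)))
      + f (take i xs @ (g (take n (drop i xs)) * xs ! (i + n)) # drop (i + (n + 1)) xs)"
      unfolding hd by (simp only: hoch_add[OF f l] hoch_sum[OF f l] hoch_sgnpow[OF f l])
    then show "f (take i xs @ hdiff n g ?c # drop (i + (n + 1)) xs) =
      f (take i xs @ (xs ! i * g (take n (drop (i + 1) xs))) # drop (i + 1 + n) xs)
      + (\<Sum>k\<in>{1..n}. sgnpow k (f (take i xs @ g (ctr k ?c) # drop (i + n + 1) xs)))
      + f (take i xs @ (g (take n (drop i xs)) * xs ! (i + n)) # drop (i + n + 1) xs)"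
      by (simp only: e(1)[symmetric] e(2)[symmetric])
  qed
  also have "\<dots> = (\<Sum>i<m. sgnpow i (f (take i xs @ (xs ! i * g (take n (drop (i + 1) xs))) # drop (i + 1 + n) xs)))
   + (\<Sum>(i, k)\<in>{..<m} \<times> {1..n}. sgnpow i (sgnpow k (f (take i xs @ g (ctr k (take (n + 1) (drop i xs))) # drop (i + n + 1) xs))))
   + (\<Sum>i<m. sgnpow i (f (take i xs @ (g (take n (drop i xs)) * xs ! (i + n)) # drop (i + n + 1) xs)))"
    by (simp add: sum.distrib sgnpow_add sgnpow_sum sum.cartesian_product)
  finally show ?thesis .
qed

lemma homo_B:
  assumes m: "odd m" and n: "odd n" and len: "length xs = m + n"
  shows "(\<Sum>(i, k)\<in>{..<m + 1} \<times> {1..m}. sgnpow k (f (ctr k (ins i n g xs)))) =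
      (\<Sum>(K, i)\<in>{(K, i). 1 \<le> K \<and> K \<le> i \<and> i < m}. sgnpow K (f (ins i n g (ctr K xs))))
    + (\<Sum>(K, i)\<in>{(K, i). i < m \<and> i + n + 1 \<le> K \<and> K \<le> m + n - 1}. sgnpow K (f (ins i n g (ctr K xs))))
    - (\<Sum>i<m. sgnpow i (f (take i xs @ (xs ! i * g (take n (drop (i + 1) xs))) # drop (i + 1 + n) xs)))
    - (\<Sum>i<m. sgnpow i (f (take i xs @ (g (take n (drop i xs)) * xs ! (i + n)) # drop (i + n + 1) xs)))"
proof -
  have m1: "1 \<le> m" and n1: "1 \<le> n" using m n by (cases m; simp; cases n; simp)+
  define FB where "FB = (\<lambda>(i, k). sgnpow k (f (ctr k (ins i n g xs))))"
  define FT where "FT = (\<lambda>(K, i). sgnpow K (f (ins i n g (ctr K xs))))"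
  define Plt where "Plt = {(i, k). 1 \<le> k \<and> k < i \<and> i \<le> m}"
  define Peq where "Peq = (\<lambda>i. (i + 1, i + 1)) ` {..<m}"
  define Peq1 where "Peq1 = (\<lambda>i. (i, i + 1)) ` {..<m}"
  define Pgt where "Pgt = {(i, k). i + 2 \<le> k \<and> k \<le> m}"
  define Qlt where "Qlt = {(K, i). 1 \<le> K \<and> K \<le> i \<and> i < m}"
  define Qgt where "Qgt = {(K, i). i < m \<and> i + n + 1 \<le> K \<and> K \<le> m + n - 1}"
  have fin: "finite Plt" "finite Peq" "finite Peq1" "finite Pgt"
  proof -
    have "Plt \<subseteq> {..m} \<times> {..m}" "Pgt \<subseteq> {..m} \<times> {..m}" unfolding Plt_def Pgt_def by auto
    then show "finite Plt" "finite Peq" "finite Peq1" "finite Pgt" unfolding Peq_def Peq1_def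
      by (auto intro: finite_subset)
  qed
  have split: "{..<m + 1} \<times> {1..m} = Plt \<union> Peq \<union> Peq1 \<union> Pgt"
  proof (intro equalityI subsetI)
    fix p assume p: "p \<in> {..<m + 1} \<times> {1..m}"
    obtain i k where pe: "p = (i, k)" by (cases p)
    have ik: "i \<le> m" "1 \<le> k" "k \<le> m" using p pe by auto
    consider "k < i" | "k = i" | "k = i + 1" | "i + 2 \<le> k" by linarith
    then show "p \<in> Plt \<union> Peq \<union> Peq1 \<union> Pgt"
    proof cases
      case 1 then show ?thesis using ik pe by (simp add: Plt_def)
    next
      case 2
      then have "p = (\<lambda>i. (i + 1, i + 1)) (k - 1)" "k - 1 < m" using ik pe by auto
      then show ?thesis unfolding Peq_def by blast
    next
      case 3
      then have "p = (\<lambda>i. (i, i + 1)) i" "i < m" using ik pe by auto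
      then show ?thesis unfolding Peq1_def by blast
    next
      case 4 then show ?thesis using ik pe by (simp add: Pgt_def)
    qed
  next
    fix p assume "p \<in> Plt \<union> Peq \<union> Peq1 \<union> Pgt"
    then show "p \<in> {..<m + 1} \<times> {1..m}" unfolding Plt_def Peq_def Peq1_def Pgt_def by auto
  qed
  have disj: "Plt \<inter> Peq = {}" "(Plt \<union> Peq) \<inter> Peq1 = {}" "(Plt \<union> Peq \<union> Peq1) \<inter> Pgt = {}"
    unfolding Plt_def Peq_def Peq1_def Pgt_def by auto
  have S: "sum FB ({..<m + 1} \<times> {1..m}) = sum FB Plt + sum FB Peq + sum FB Peq1 + sum FB Pgt"
    unfolding split using fin disj by (simp add: sum.union_disjoint)
  have Seq: "sum FB Peq = - (\<Sum>i<m. sgnpow i (f (take i xs @ (xs ! i * g (take n (drop (i + 1) xs))) # drop (i + 1 + n) xs)))"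
  proof -
    have "sum FB Peq = (\<Sum>i<m. FB (i + 1, i + 1))" unfolding Peq_def
      by (subst sum.reindex) (auto simp: inj_on_def)
    also have "\<dots> = (\<Sum>i<m. - sgnpow i (f (take i xs @ (xs ! i * g (take n (drop (i + 1) xs))) # drop (i + 1 + n) xs)))"
    proof (intro sum.cong refl)
      fix i assume i: "i \<in> {..<m}"
      have c: "ctr (i + 1) (ins (i + 1) n g xs) = take i xs @ (xs ! i * g (take n (drop (i + 1) xs))) # drop (i + 1 + n) xs"
        by (rule l8) (use i len in simp)
      show "FB (i + 1, i + 1) = - sgnpow i (f (take i xs @ (xs ! i * g (take n (drop (i + 1) xs))) # drop (i + 1 + n) xs))"
        unfolding FB_def prod.case c by (simp only: Suc_eq_plus1[symmetric] sgnpow_Suc)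
    qed
    finally show ?thesis by (simp add: sum_negf)
  qed
  have Seq1: "sum FB Peq1 = - (\<Sum>i<m. sgnpow i (f (take i xs @ (g (take n (drop i xs)) * xs ! (i + n)) # drop (i + n + 1) xs)))"
  proof -
    have "sum FB Peq1 = (\<Sum>i<m. FB (i, i + 1))" unfolding Peq1_def
      by (subst sum.reindex) (auto simp: inj_on_def)
    also have "\<dots> = (\<Sum>i<m. - sgnpow i (f (take i xs @ (g (take n (drop i xs)) * xs ! (i + n)) # drop (i + n + 1) xs)))"
    proof (intro sum.cong refl)
      fix i assume i: "i \<in> {..<m}"
      have c: "ctr (i + 1) (ins i n g xs) = take i xs @ (g (take n (drop i xs)) * xs ! (i + n)) # drop (i + n + 1) xs"
        by (rule l9) (use i len in simp)
      show "FB (i, i + 1) = - sgnpow i (f (take i xs @ (g (take n (drop i xs)) * xs ! (i + n)) # drop (i + n + 1) xs))"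
        unfolding FB_def prod.case c by (simp only: Suc_eq_plus1[symmetric] sgnpow_Suc)
    qed
    finally show ?thesis by (simp add: sum_negf)
  qed
  have Slt: "sum FT Qlt = sum FB Plt"
  proof (rule sum.reindex_bij_witness[where i="\<lambda>(i, k). (k, i - 1)" and j="\<lambda>(K, i). (i + 1, K)"])
    fix p assume "p \<in> Qlt"
    then show "(case (case p of (K, i) \<Rightarrow> (i + 1, K)) of (i, k) \<Rightarrow> (k, i - 1)) = p"
      and "(case p of (K, i) \<Rightarrow> (i + 1, K)) \<in> Plt" unfolding Qlt_def Plt_def by auto
  next
    fix p assume "p \<in> Plt"
    then show "(case (case p of (i, k) \<Rightarrow> (k, i - 1)) of (K, i) \<Rightarrow> (i + 1, K)) = p"
      and "(case p of (i, k) \<Rightarrow> (k, i - 1)) \<in> Qlt" unfolding Qlt_def Plt_def by auto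
  next
    fix p assume "p \<in> Qlt"
    then obtain K i where p: "p = (K, i)" "1 \<le> K" "K \<le> i" "i < m" unfolding Qlt_def by auto
    have "ctr K (ins (i + 1) n g xs) = ins i n g (ctr K xs)"
      using l5[of K "i + 1" n xs g] p len by simp
    then show "FB (case p of (K, i) \<Rightarrow> (i + 1, K)) = FT p" unfolding p(1) FB_def FT_def by simp
  qed
  have Sgt: "sum FT Qgt = sum FB Pgt"
  proof (rule sum.reindex_bij_witness[where i="\<lambda>(i, k). (k + n - 1, i)" and j="\<lambda>(K, i). (i, K - n + 1)"])
    fix p assume "p \<in> Qgt"
    then show "(case (case p of (K, i) \<Rightarrow> (i, K - n + 1)) of (i, k) \<Rightarrow> (k + n - 1, i)) = p"
      and "(case p of (K, i) \<Rightarrow> (i, K - n + 1)) \<in> Pgt" unfolding Qgt_def Pgt_def using n1 by auto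
  next
    fix p assume "p \<in> Pgt"
    then show "(case (case p of (i, k) \<Rightarrow> (k + n - 1, i)) of (K, i) \<Rightarrow> (i, K - n + 1)) = p"
      and "(case p of (i, k) \<Rightarrow> (k + n - 1, i)) \<in> Qgt" unfolding Qgt_def Pgt_def using n1 by auto
  next
    fix p assume "p \<in> Qgt"
    then obtain K i where p: "p = (K, i)" "i < m" "i + n + 1 \<le> K" "K \<le> m + n - 1" unfolding Qgt_def by auto
    have e: "K - n + 1 + n - 1 = K" using p n1 by simp
    have "ctr (K - n + 1) (ins i n g xs) = ins i n g (ctr (K - n + 1 + n - 1) xs)"
      by (rule l6) (use p len n1 in simp_all)
    then have c: "ctr (K - n + 1) (ins i n g xs) = ins i n g (ctr K xs)" unfolding e .
    have par: "even (K - n + 1) = even K"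
    proof -
      have KK: "K = (K - n + 1) + (n - 1)" using p n1 by simp
      have "even (n - 1)" using n n1 by simp
      then show ?thesis by (subst (2) KK) simp
    qed
    show "FB (case p of (K, i) \<Rightarrow> (i, K - n + 1)) = FT p" unfolding p(1) FB_def FT_def
      by (simp only: prod.case c sgnpow_cong[OF par])
  qed
  show ?thesis unfolding FB_def[symmetric] FT_def[symmetric] Qlt_def[symmetric] Qgt_def[symmetric]
    unfolding S Seq Seq1 Slt Sgt by (simp add: algebra_simps)
qed

lemma homo_T2:
  assumes m: "odd m" and n: "odd n" and len: "length xs = m + n"
  shows "(\<Sum>(K, i)\<in>{1..m + n - 1} \<times> {..<m}. sgnpow K (f (ins i n g (ctr K xs)))) =
      (\<Sum>(K, i)\<in>{(K, i). 1 \<le> K \<and> K \<le> i \<and> i < m}. sgnpow K (f (ins i n g (ctr K xs))))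
    + (\<Sum>(K, i)\<in>{(K, i). i < m \<and> i + n + 1 \<le> K \<and> K \<le> m + n - 1}. sgnpow K (f (ins i n g (ctr K xs))))
    + (\<Sum>(i, k)\<in>{..<m} \<times> {1..n}. sgnpow i (sgnpow k (f (take i xs @ g (ctr k (take (n + 1) (drop i xs))) # drop (i + n + 1) xs))))"
proof -
  have m1: "1 \<le> m" and n1: "1 \<le> n" using m n by (cases m; simp; cases n; simp)+
  define FT where "FT = (\<lambda>(K, i). sgnpow K (f (ins i n g (ctr K xs))))"
  define Qlt where "Qlt = {(K, i). 1 \<le> K \<and> K \<le> i \<and> i < m}"
  define Qgt where "Qgt = {(K, i). i < m \<and> i + n + 1 \<le> K \<and> K \<le> m + n - 1}"
  define Qin where "Qin = {(K, i). i < m \<and> i + 1 \<le> K \<and> K \<le> i + n}"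
  have fin: "finite Qlt" "finite Qgt" "finite Qin"
  proof -
    have "Qlt \<subseteq> {..m + n} \<times> {..m}" "Qgt \<subseteq> {..m + n} \<times> {..m}" "Qin \<subseteq> {..m + n} \<times> {..m}"
      unfolding Qlt_def Qgt_def Qin_def by auto
    then show "finite Qlt" "finite Qgt" "finite Qin" by (auto intro: finite_subset)
  qed
  have split: "{1..m + n - 1} \<times> {..<m} = Qlt \<union> Qgt \<union> Qin"
    unfolding Qlt_def Qgt_def Qin_def using m1 n1 by auto
  have disj: "Qlt \<inter> Qgt = {}" "(Qlt \<union> Qgt) \<inter> Qin = {}" unfolding Qlt_def Qgt_def Qin_def by auto
  have S: "sum FT ({1..m + n - 1} \<times> {..<m}) = sum FT Qlt + sum FT Qgt + sum FT Qin"
    unfolding split using fin disj by (simp add: sum.union_disjoint)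
  have Sin: "sum FT Qin = (\<Sum>(i, k)\<in>{..<m} \<times> {1..n}. sgnpow i (sgnpow k (f (take i xs @ g (ctr k (take (n + 1) (drop i xs))) # drop (i + n + 1) xs))))"
  proof (rule sum.reindex_bij_witness[where i="\<lambda>(i, k). (i + k, i)" and j="\<lambda>(K, i). (i, K - i)"])
    fix p assume "p \<in> Qin"
    then show "(case (case p of (K, i) \<Rightarrow> (i, K - i)) of (i, k) \<Rightarrow> (i + k, i)) = p"
      and "(case p of (K, i) \<Rightarrow> (i, K - i)) \<in> {..<m} \<times> {1..n}" unfolding Qin_def by auto
  next
    fix p assume "p \<in> {..<m} \<times> {1..n}"
    then show "(case (case p of (i, k) \<Rightarrow> (i + k, i)) of (K, i) \<Rightarrow> (i, K - i)) = p"
      and "(case p of (i, k) \<Rightarrow> (i + k, i)) \<in> Qin" unfolding Qin_def by auto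
  next
    fix p assume "p \<in> Qin"
    then obtain K i where p: "p = (K, i)" "i < m" "i + 1 \<le> K" "K \<le> i + n" unfolding Qin_def by auto
    have e: "i + (K - i) = K" using p by simp
    have "ins i n g (ctr (i + (K - i)) xs) = take i xs @ g (ctr (K - i) (take (n + 1) (drop i xs))) # drop (i + n + 1) xs"
      by (rule l7) (use p len in simp_all)
    then have c: "ins i n g (ctr K xs) = take i xs @ g (ctr (K - i) (take (n + 1) (drop i xs))) # drop (i + n + 1) xs"
      unfolding e .
    show "(case (case p of (K, i) \<Rightarrow> (i, K - i)) of (i, k) \<Rightarrow> sgnpow i (sgnpow k (f (take i xs @ g (ctr k (take (n + 1) (drop i xs))) # drop (i + n + 1) xs)))) = FT p"
      unfolding p(1) FT_def prod.case c sgnpow_sgnpow e ..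
  qed
  show ?thesis unfolding FT_def[symmetric] Qlt_def[symmetric] Qgt_def[symmetric] S Sin ..
qed

lemma homotopy:
  assumes f: "hoch_cochain m f" and m: "odd m" and n: "odd n" and len: "length xs = m + n"
  shows "hdiff (m + n - 1) (brace m n f g) xs =
     brace (m + 1) n (hdiff m f) g xs + brace m (n + 1) f (hdiff n g) xs - cup m f g xs - cup n g f xs"
  unfolding homo_T[OF m n len] homo_R1[OF m n len] homo_R2[OF f m n len] homo_B[OF m n len] homo_T2[OF m n len]
  by (simp add: algebra_simps)


definition bi :: "nat \<Rightarrow> ('a::ring list \<Rightarrow> 'a) \<Rightarrow> ('a list \<Rightarrow> 'a) \<Rightarrow> nat \<Rightarrow> 'a list \<Rightarrow> 'a" where
  "bi n x b i = adpow n (Suc n) x i b"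

fun rp :: "nat \<Rightarrow> ('a::ring list \<Rightarrow> 'a) \<Rightarrow> nat \<Rightarrow> nat \<Rightarrow> ('a list \<Rightarrow> 'a) \<Rightarrow> 'a list \<Rightarrow> 'a" where
  "rp n x d 0 f = f"
| "rp n x d (Suc j) f = brace (d + j * (n - 1)) n (rp n x d j f) x"

definition FF :: "nat \<Rightarrow> ('a::ring list \<Rightarrow> 'a) \<Rightarrow> ('a list \<Rightarrow> 'a) \<Rightarrow> nat \<Rightarrow> nat \<Rightarrow> 'a list \<Rightarrow> 'a" where
  "FF n x b j i = rp n x (Suc n + i * (n - 1)) j (bi n x b i)"

definition GG :: "nat \<Rightarrow> ('a::ring list \<Rightarrow> 'a) \<Rightarrow> ('a list \<Rightarrow> 'a) \<Rightarrow> nat \<Rightarrow> (nat \<Rightarrow> nat) \<Rightarrow> 'a list \<Rightarrow> 'a" where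
  "GG n x b t c = (\<lambda>xs. \<Sum>j\<le>t. nsm (c j) (FF n x b (t - j) j xs))"

definition WW :: "nat \<Rightarrow> ('a::ring list \<Rightarrow> 'a) \<Rightarrow> ('a list \<Rightarrow> 'a) \<Rightarrow> nat \<Rightarrow> nat \<Rightarrow> 'a list \<Rightarrow> 'a" where
  "WW n x b k i = brace (k * (n - 1) + 1) (Suc n + i * (n - 1)) (brpow n x k) (bi n x b i)"

definition PP :: "nat \<Rightarrow> ('a::ring list \<Rightarrow> 'a) \<Rightarrow> nat \<Rightarrow> nat \<Rightarrow> 'a list \<Rightarrow> 'a" where
  "PP n x i j = cup (i * (n - 1) + 1) (brpow n x i) (brpow n x j)"

definition CC :: "nat \<Rightarrow> ('a::ring list \<Rightarrow> 'a) \<Rightarrow> nat \<Rightarrow> 'a list \<Rightarrow> 'a" where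
  "CC n x k = (\<lambda>xs. - (\<Sum>i\<in>{1..k - 1}. nsm (k choose i) (PP n x i (k - i) xs)))"

lemma odd_n: "odd n \<Longrightarrow> n = Suc (n - 1)" by (cases n) auto

lemma hX: assumes n: "odd n" and x: "hoch_cochain n x" and k: "1 \<le> k"
  shows "hoch_cochain (k * (n - 1) + 1) (brpow n x k)"
proof -
  obtain q where nq: "n = Suc q" using n by (cases n) auto
  have n1: "1 \<le> n" using nq by simp
  have "hoch_cochain (Suc k' * (n - 1) + 1) (brpow n x (Suc k'))" for k'
  proof (induct k')
    case 0 then show ?case using x n1 by simp
  next
    case (Suc k')
    have h: "hoch_cochain (Suc k' * (n - 1) + 1 + n - 1) (brpow n x (Suc (Suc k')))"
      using brace_hoch[OF Suc x n1] by simp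
    have e: "Suc k' * (n - 1) + 1 + n - 1 = Suc (Suc k') * (n - 1) + 1" using nq by simp
    show ?case using h unfolding e .
  qed
  then show ?thesis using k by (cases k) auto
qed

lemma RX: "1 \<le> k \<Longrightarrow> brace (k * (n - 1) + 1) n (brpow n x k) x = brpow n x (Suc k)"
  by (cases k) auto

lemma RF: "j \<le> t \<Longrightarrow> brace (Suc n + t * (n - 1)) n (FF n x b (t - j) j) x = FF n x b (Suc t - j) j"
proof -
  assume j: "j \<le> t"
  have e: "Suc n + j * (n - 1) + (t - j) * (n - 1) = Suc n + t * (n - 1)"
    using j by (simp add: add_mult_distrib[symmetric])
  have "FF n x b (Suc t - j) j = brace (Suc n + j * (n - 1) + (t - j) * (n - 1)) n (FF n x b (t - j) j) x"
    using j by (simp add: FF_def Suc_diff_le)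
  then show ?thesis unfolding e by simp
qed

lemma RG: "c (Suc t) = 0 \<Longrightarrow> brace (Suc n + t * (n - 1)) n (GG n x b t c) x xs = GG n x b (Suc t) c xs"
proof -
  assume c: "c (Suc t) = 0"
  have "brace (Suc n + t * (n - 1)) n (GG n x b t c) x xs =
     (\<Sum>j\<le>t. nsm (c j) (brace (Suc n + t * (n - 1)) n (FF n x b (t - j) j) x xs))"
    unfolding GG_def by (simp only: brace_lin1(6) brace_lin1(4))
  also have "\<dots> = (\<Sum>j\<le>t. nsm (c j) (FF n x b (Suc t - j) j xs))"
    by (intro sum.cong refl) (simp only: RF atMost_iff)
  also have "\<dots> = GG n x b (Suc t) c xs" unfolding GG_def using c by simp
  finally show ?thesis .
qed

lemma GG_add: "GG n x b t c xs + GG n x b t d xs = GG n x b t (\<lambda>j. c j + d j) xs"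
  unfolding GG_def by (simp add: nsm_plus sum.distrib)

lemma GG_cong: "(\<And>j. j \<le> t \<Longrightarrow> c j = d j) \<Longrightarrow> GG n x b t c xs = GG n x b t d xs"
  unfolding GG_def by (intro sum.cong refl) simp

lemma bi_Suc: assumes n: "odd n"
  shows "bi n x b (Suc i) = (\<lambda>ys. brace n (Suc n + i * (n - 1)) x (bi n x b i) ys - brace (Suc n + i * (n - 1)) n (bi n x b i) x ys)"
proof -
  have "even ((n + 1) * (Suc n + i * (n - 1) + 1))" using n by simp
  then show ?thesis unfolding bi_def by (simp add: gbracket_def)
qed

lemma W1: assumes n: "odd n"
  shows "WW n x b 1 i xs = FF n x b 0 (Suc i) xs + FF n x b 1 i xs"
proof -
  have n1: "1 * (n - 1) + 1 = n" using n by (cases n) auto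
  show ?thesis unfolding WW_def FF_def using n1 by (simp add: bi_Suc[OF n])
qed

lemma Wrec:
  assumes n: "odd n" and x: "hoch_cochain n x" and k: "1 \<le> k"
    and len: "length xs = Suc n + (Suc k + i) * (n - 1)"
  shows "WW n x b (Suc k) i xs = brace (Suc n + (k + i) * (n - 1)) n (WW n x b k i) x xs + WW n x b k (Suc i) xs"
proof -
  obtain q where nq: "n = Suc q" using n by (cases n) auto
  define a where "a = k * (n - 1) + 1"
  define m where "m = Suc n + i * (n - 1)"
  define D where "D = Suc n + Suc i * (n - 1)"
  let ?z = "brpow n x k" and ?y = "bi n x b i"
  have hz: "hoch_cochain a ?z" unfolding a_def by (rule hX[OF n x k])
  have m1: "1 \<le> m" unfolding m_def by simp
  have len2: "length xs + 2 = a + n + m" using len unfolding a_def m_def nq by (simp add: algebra_simps)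
  note P = prelie[OF hz n m1 len2, of x ?y]
  have e1: "a + n - 1 = Suc k * (n - 1) + 1" unfolding a_def nq by simp
  have e2: "a + m - 1 = Suc n + (k + i) * (n - 1)" unfolding a_def m_def nq by (simp add: algebra_simps)
  have e3: "n + m - 1 = D" "m + n - 1 = D" unfolding D_def m_def nq by simp_all
  have f1: "brace a n ?z x = brpow n x (Suc k)" unfolding a_def by (rule RX[OF k])
  have f2: "brace (Suc k * (n - 1) + 1) m (brpow n x (Suc k)) ?y = WW n x b (Suc k) i" unfolding WW_def m_def ..
  have f3: "brace a m ?z ?y = WW n x b k i" unfolding WW_def a_def m_def ..
  have len': "length xs + 1 = a + D" using len unfolding a_def D_def nq by (simp add: algebra_simps)
  have f4: "brace a D ?z (brace n m x ?y) xs - brace a D ?z (brace m n ?y x) xs = WW n x b k (Suc i) xs"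
  proof -
    have "brace a D ?z (brace n m x ?y) xs - brace a D ?z (brace m n ?y x) xs =
        brace a D ?z (\<lambda>ys. brace n m x ?y ys - brace m n ?y x ys) xs"
      by (rule brace_lin2(2)[OF hz len', symmetric])
    also have "(\<lambda>ys. brace n m x ?y ys - brace m n ?y x ys) = bi n x b (Suc i)"
      unfolding bi_Suc[OF n] m_def ..
    finally show ?thesis unfolding WW_def a_def D_def .
  qed
  from P have "WW n x b (Suc k) i xs - brace a D ?z (brace n m x ?y) xs =
     brace (Suc n + (k + i) * (n - 1)) n (WW n x b k i) x xs - brace a D ?z (brace m n ?y x) xs"
    unfolding e1 e2 e3 f1 f2 f3 .
  then show ?thesis using f4 by (simp add: algebra_simps)
qed

lemma Wclosed:
  assumes n: "odd n" and x: "hoch_cochain n x" and k: "1 \<le> k"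
  shows "\<forall>i xs. length xs = Suc n + (k + i) * (n - 1) \<longrightarrow>
     WW n x b k i xs = GG n x b (k + i) (\<lambda>j. if i \<le> j then k choose (j - i) else 0) xs"
  using k
proof (induct k rule: dec_induct)
  case base
  show ?case
  proof (intro allI impI)
    fix i and xs :: "'a list"
    have "GG n x b (1 + i) (\<lambda>j. if i \<le> j then 1 choose (j - i) else 0) xs =
       (\<Sum>j<i. nsm (if i \<le> j then 1 choose (j - i) else 0) (FF n x b (1 + i - j) j xs))
       + FF n x b 1 i xs + FF n x b 0 (Suc i) xs"
      unfolding GG_def by (simp add: lessThan_Suc_atMost[symmetric])
    also have "(\<Sum>j<i. nsm (if i \<le> j then 1 choose (j - i) else 0) (FF n x b (1 + i - j) j xs)) = 0"
      by (intro sum.neutral) auto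
    finally show "WW n x b 1 i xs = GG n x b (1 + i) (\<lambda>j. if i \<le> j then 1 choose (j - i) else 0) xs"
      unfolding W1[OF n] by (simp add: add.commute)
  qed
next
  case (step k)
  show ?case
  proof (intro allI impI)
    fix i and xs :: "'a list"
    assume len: "length xs = Suc n + (Suc k + i) * (n - 1)"
    obtain q where nq: "n = Suc q" using n by (cases n) auto
    have eq: "eqon (Suc n + (k + i) * (n - 1)) (WW n x b k i) (GG n x b (k + i) (\<lambda>j. if i \<le> j then k choose (j - i) else 0))"
      using step(3) by (auto intro: eqonI)
    have len1: "length xs + 1 = Suc n + (k + i) * (n - 1) + n" using len nq by (simp add: algebra_simps)
    have "WW n x b (Suc k) i xs = brace (Suc n + (k + i) * (n - 1)) n (WW n x b k i) x xs + WW n x b k (Suc i) xs"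
      by (rule Wrec[OF n x step(1) len])
    also have "brace (Suc n + (k + i) * (n - 1)) n (WW n x b k i) x xs =
       brace (Suc n + (k + i) * (n - 1)) n (GG n x b (k + i) (\<lambda>j. if i \<le> j then k choose (j - i) else 0)) x xs"
      by (rule brace_cong1[OF eq len1])
    also have "\<dots> = GG n x b (Suc (k + i)) (\<lambda>j. if i \<le> j then k choose (j - i) else 0) xs"
      by (rule RG) simp
    also have "WW n x b k (Suc i) xs = GG n x b (k + Suc i) (\<lambda>j. if Suc i \<le> j then k choose (j - Suc i) else 0) xs"
      using step(3) len by simp
    also have "GG n x b (Suc (k + i)) (\<lambda>j. if i \<le> j then k choose (j - i) else 0) xs
        + GG n x b (k + Suc i) (\<lambda>j. if Suc i \<le> j then k choose (j - Suc i) else 0) xs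
      = GG n x b (Suc k + i) (\<lambda>j. if i \<le> j then Suc k choose (j - i) else 0) xs"
    proof -
      have e: "k + Suc i = Suc (k + i)" "Suc k + i = Suc (k + i)" by simp_all
      show ?thesis unfolding e GG_add
      proof (rule GG_cong)
        fix j
        show "(if i \<le> j then k choose (j - i) else 0) + (if Suc i \<le> j then k choose (j - Suc i) else 0) =
          (if i \<le> j then Suc k choose (j - i) else 0)"
        proof (cases "i < j")
          case True
          then obtain r where r: "j - i = Suc r" by (cases "j - i") auto
          then have "j - Suc i = r" by simp
          then show ?thesis using True r by simp
        next
          case False then show ?thesis by (cases "i = j") auto
        qed
      qed
    qed
    finally show "WW n x b (Suc k) i xs = GG n x b (Suc k + i) (\<lambda>j. if i \<le> j then Suc k choose (j - i) else 0) xs" .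
  qed
qed

lemma comb_id:
  fixes Q :: "nat \<Rightarrow> nat \<Rightarrow> 'b::ab_group_add"
  assumes k: "1 \<le> k"
  shows "- (\<Sum>i\<in>{1..k - 1}. nsm (k choose i) (Q (Suc i) (k - i) + Q i (Suc (k - i)))) - Q k 1 - Q 1 k
       = - (\<Sum>i\<in>{1..Suc k - 1}. nsm (Suc k choose i) (Q i (Suc k - i)))"
proof -
  obtain k' where kk: "k = Suc k'" using k by (cases k) auto
  have A: "(\<Sum>i\<in>{1..k}. nsm (Suc k choose i) (Q i (Suc k - i))) =
     (\<Sum>i\<in>{1..k}. nsm (k choose (i - 1)) (Q i (Suc k - i))) + (\<Sum>i\<in>{1..k}. nsm (k choose i) (Q i (Suc k - i)))"
  proof -
    have "(\<Sum>i\<in>{1..k}. nsm (Suc k choose i) (Q i (Suc k - i))) =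
       (\<Sum>i\<in>{1..k}. nsm (k choose (i - 1)) (Q i (Suc k - i)) + nsm (k choose i) (Q i (Suc k - i)))"
    proof (intro sum.cong refl)
      fix i assume "i \<in> {1..k}"
      then obtain r where r: "i = Suc r" by (cases i) auto
      show "nsm (Suc k choose i) (Q i (Suc k - i)) = nsm (k choose (i - 1)) (Q i (Suc k - i)) + nsm (k choose i) (Q i (Suc k - i))"
        unfolding r by (simp add: nsm_plus)
    qed
    then show ?thesis by (simp add: sum.distrib)
  qed
  have B: "(\<Sum>i\<in>{1..k}. nsm (k choose (i - 1)) (Q i (Suc k - i))) =
      Q 1 k + (\<Sum>i\<in>{1..k'}. nsm (k choose i) (Q (Suc i) (k - i)))"
  proof -
    have "(\<Sum>i\<in>{1..k}. nsm (k choose (i - 1)) (Q i (Suc k - i))) = (\<Sum>i\<in>{0..k'}. nsm (k choose i) (Q (Suc i) (k - i)))"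
    proof -
      have e: "{1..k} = Suc ` {0..k'}" unfolding kk by (simp add: image_Suc_atLeastAtMost)
      show ?thesis unfolding e by (subst sum.reindex) (auto simp: comp_def)
    qed
    also have "\<dots> = nsm (k choose 0) (Q (Suc 0) (k - 0)) + (\<Sum>i\<in>{1..k'}. nsm (k choose i) (Q (Suc i) (k - i)))"
      by (subst sum.atLeast_Suc_atMost) simp_all
    finally show ?thesis by simp
  qed
  have C: "(\<Sum>i\<in>{1..k}. nsm (k choose i) (Q i (Suc k - i))) =
      (\<Sum>i\<in>{1..k'}. nsm (k choose i) (Q i (Suc (k - i)))) + Q k 1"
  proof -
    have "(\<Sum>i\<in>{1..k}. nsm (k choose i) (Q i (Suc k - i))) =
       (\<Sum>i\<in>{1..k'}. nsm (k choose i) (Q i (Suc k - i))) + nsm (k choose k) (Q k (Suc k - k))"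
      unfolding kk by (simp only: sum.cl_ivl_Suc) simp
    also have "(\<Sum>i\<in>{1..k'}. nsm (k choose i) (Q i (Suc k - i))) = (\<Sum>i\<in>{1..k'}. nsm (k choose i) (Q i (Suc (k - i))))"
      by (intro sum.cong refl) (simp add: kk Suc_diff_le)
    finally show ?thesis by simp
  qed
  have D: "(\<Sum>i\<in>{1..k - 1}. nsm (k choose i) (Q (Suc i) (k - i) + Q i (Suc (k - i)))) =
     (\<Sum>i\<in>{1..k'}. nsm (k choose i) (Q (Suc i) (k - i))) + (\<Sum>i\<in>{1..k'}. nsm (k choose i) (Q i (Suc (k - i))))"
    unfolding kk by (simp add: nsm_add sum.distrib)
  show ?thesis using A B C D by (simp add: algebra_simps)
qed

lemma RPP:
  assumes n: "odd n" and i: "1 \<le> i" and j: "1 \<le> j" and len: "length xs + 1 = (i + j) * (n - 1) + 2 + n"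
  shows "brace ((i + j) * (n - 1) + 2) n (PP n x i j) x xs = PP n x (Suc i) j xs + PP n x i (Suc j) xs"
proof -
  obtain q where nq: "n = Suc q" using n by (cases n) auto
  have e1: "(i + j) * (n - 1) + 2 = (i * (n - 1) + 1) + (j * (n - 1) + 1)" by (simp add: add_mult_distrib)
  have len': "length xs + 1 = (i * (n - 1) + 1) + (j * (n - 1) + 1) + n" using len e1 by simp
  have e2: "i * (n - 1) + 1 + n - 1 = Suc i * (n - 1) + 1" using nq by simp
  show ?thesis unfolding e1 PP_def leibniz[OF n len'] RX[OF i] RX[OF j] e2 ..
qed

lemma dX:
  assumes n: "odd n" and x: "hoch_cochain n x"
    and hb: "\<forall>xs. length xs = Suc n \<longrightarrow> hdiff n x xs = nsm p (b xs)" and k: "1 \<le> k"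
  shows "\<forall>xs. length xs = Suc (k * (n - 1) + 1) \<longrightarrow>
     hdiff (k * (n - 1) + 1) (brpow n x k) xs = nsm p (GG n x b (k - 1) (\<lambda>j. k choose Suc j) xs) + CC n x k xs"
  using k
proof (induct k rule: dec_induct)
  case base
  obtain q where nq: "n = Suc q" using n by (cases n) auto
  have "GG n x b 0 (\<lambda>j. 1 choose Suc j) xs = b xs" for xs :: "'a list"
    by (simp add: GG_def FF_def bi_def)
  moreover have "CC n x 1 xs = 0" for xs :: "'a list" by (simp add: CC_def)
  ultimately show ?case using hb nq by simp
next
  case (step k)
  show ?case
  proof (intro allI impI)
    fix xs :: "'a list"
    assume len: "length xs = Suc (Suc k * (n - 1) + 1)"
    obtain q where nq: "n = Suc q" using n by (cases n) auto
    define m where "m = k * (n - 1) + 1"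
    have eq: "even q" using n nq by simp
    have mo: "odd m" unfolding m_def nq using eq by simp
    have hk: "hoch_cochain m (brpow n x k)" unfolding m_def by (rule hX[OF n x step(1)])
    have lenm: "length xs = m + n" using len unfolding m_def nq by simp
    have e0: "Suc k * (n - 1) + 1 = m + n - 1" unfolding m_def nq by simp
    have e1: "brpow n x (Suc k) = brace m n (brpow n x k) x" unfolding m_def by (rule RX[OF step(1), symmetric])
    have H: "hdiff (Suc k * (n - 1) + 1) (brpow n x (Suc k)) xs =
       brace (m + 1) n (hdiff m (brpow n x k)) x xs + brace m (n + 1) (brpow n x k) (hdiff n x) xs
       - cup m (brpow n x k) x xs - cup n x (brpow n x k) xs"
      unfolding e0 e1 by (rule homotopy[OF hk mo n lenm])
    have IH: "eqon (m + 1) (hdiff m (brpow n x k)) (\<lambda>ys. nsm p (GG n x b (k - 1) (\<lambda>j. k choose Suc j) ys) + CC n x k ys)"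
      using step(3) unfolding m_def by (auto intro: eqonI)
    have len1: "length xs + 1 = m + 1 + n" using lenm by simp
    have T1: "brace (m + 1) n (hdiff m (brpow n x k)) x xs =
        nsm p (GG n x b k (\<lambda>j. k choose Suc j) xs) + brace (m + 1) n (CC n x k) x xs"
    proof -
      have em: "m + 1 = Suc n + (k - 1) * (n - 1)" unfolding m_def nq using step(1)
        by (cases k) (auto simp: algebra_simps)
      have "brace (m + 1) n (hdiff m (brpow n x k)) x xs =
          brace (m + 1) n (\<lambda>ys. nsm p (GG n x b (k - 1) (\<lambda>j. k choose Suc j) ys) + CC n x k ys) x xs"
        by (rule brace_cong1[OF IH len1])
      also have "\<dots> = nsm p (brace (m + 1) n (GG n x b (k - 1) (\<lambda>j. k choose Suc j)) x xs) + brace (m + 1) n (CC n x k) x xs"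
        by (simp only: brace_lin1(1) brace_lin1(4))
      also have "brace (m + 1) n (GG n x b (k - 1) (\<lambda>j. k choose Suc j)) x xs = GG n x b (Suc (k - 1)) (\<lambda>j. k choose Suc j) xs"
        unfolding em by (rule RG) (use step(1) in simp)
      finally show ?thesis using step(1) by simp
    qed
    have T2: "brace m (n + 1) (brpow n x k) (hdiff n x) xs = nsm p (GG n x b k (\<lambda>j. k choose j) xs)"
    proof -
      have eqb: "eqon (n + 1) (hdiff n x) (\<lambda>ys. nsm p (b ys))" using hb by (auto intro: eqonI)
      have len2: "length xs + 1 = m + (n + 1)" using lenm by simp
      have "brace m (n + 1) (brpow n x k) (hdiff n x) xs = brace m (n + 1) (brpow n x k) (\<lambda>ys. nsm p (b ys)) xs"
        by (rule brace_cong2[OF eqb len2])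
      also have "\<dots> = nsm p (brace m (n + 1) (brpow n x k) b xs)" by (rule brace_lin2(3)[OF hk len2])
      also have "brace m (n + 1) (brpow n x k) b xs = WW n x b k 0 xs"
        unfolding WW_def m_def bi_def by simp
      also have "\<dots> = GG n x b (k + 0) (\<lambda>j. if 0 \<le> j then k choose (j - 0) else 0) xs"
        using Wclosed[OF n x step(1)] lenm unfolding m_def nq by simp
      finally show ?thesis by simp
    qed
    have T3: "brace (m + 1) n (CC n x k) x xs - cup m (brpow n x k) x xs - cup n x (brpow n x k) xs = CC n x (Suc k) xs"
    proof -
      have B0: "brace (m + 1) n (CC n x k) x xs = - (\<Sum>i\<in>{1..k - 1}. nsm (k choose i) (brace (m + 1) n (PP n x i (k - i)) x xs))"
        unfolding CC_def by (simp only: brace_lin1(3) brace_lin1(6) brace_lin1(4))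
      have B1: "- (\<Sum>i\<in>{1..k - 1}. nsm (k choose i) (brace (m + 1) n (PP n x i (k - i)) x xs)) = - (\<Sum>i\<in>{1..k - 1}. nsm (k choose i) (PP n x (Suc i) (k - i) xs + PP n x i (Suc (k - i)) xs))"
      proof -
        have "brace (m + 1) n (PP n x i (k - i)) x xs = PP n x (Suc i) (k - i) xs + PP n x i (Suc (k - i)) xs"
          if i: "i \<in> {1..k - 1}" for i
        proof -
          have "i \<le> k" using i by auto
          then have ki: "i + (k - i) = k" by simp
          have e: "m + 1 = (i + (k - i)) * (n - 1) + 2" unfolding m_def ki by simp
          have ik: "1 \<le> k - i" using i by auto
          show ?thesis unfolding e by (rule RPP[OF n]) (use i ik lenm e in simp_all)
        qed
        then show ?thesis by simp
      qed
      have c1: "cup m (brpow n x k) x xs = PP n x k 1 xs" unfolding PP_def m_def by simp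
      have c2: "cup n x (brpow n x k) xs = PP n x 1 k xs" unfolding PP_def nq by simp
      have cc: "CC n x (Suc k) xs = - (\<Sum>i\<in>{1..Suc k - 1}. nsm (Suc k choose i) (PP n x i (Suc k - i) xs))"
        by (simp only: CC_def)
      show ?thesis unfolding B0 B1 c1 c2 cc by (rule comb_id[OF step(1), of "\<lambda>i j. PP n x i j xs"])
    qed
    have G: "GG n x b k (\<lambda>j. (k choose Suc j) + (k choose j)) xs = GG n x b k (\<lambda>j. Suc k choose Suc j) xs"
      by (rule GG_cong) (simp only: binomial_Suc_Suc add.commute)
    have N: "nsm p (GG n x b k (\<lambda>j. k choose Suc j) xs) + nsm p (GG n x b k (\<lambda>j. k choose j) xs) =
        nsm p (GG n x b (Suc k - 1) (\<lambda>j. Suc k choose Suc j) xs)"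
      unfolding nsm_add[symmetric] GG_add G by simp
    have rg: "\<And>a b c d e :: 'a. a + b + c - d - e = (a + c) + (b - d - e)" by (simp add: algebra_simps)
    show "hdiff (Suc k * (n - 1) + 1) (brpow n x (Suc k)) xs =
        nsm p (GG n x b (Suc k - 1) (\<lambda>j. Suc k choose Suc j) xs) + CC n x (Suc k) xs"
      unfolding H T1 T2 rg N T3 ..
  qed
qed


lemma choose_pm1_cong:
  assumes p: "prime p" and k: "k \<le> p - 1"
  shows "[int ((p - 1) choose k) = (-1) ^ k] (mod int p)"
  using k
proof (induct k)
  case 0 then show ?case by simp
next
  case (Suc k)
  have p1: "2 \<le> p" using p prime_ge_2_nat by blast
  have "p dvd (p choose (Suc k))" by (rule dvd_choose_prime) (use Suc p p1 in auto)
  moreover have "p choose (Suc k) = ((p - 1) choose k) + ((p - 1) choose (Suc k))"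
    using p1 binomial_Suc_Suc[of "p - 1" k] by simp
  ultimately have "[int ((p - 1) choose k) + int ((p - 1) choose Suc k) = 0] (mod int p)"
    by (metis cong_0_iff int_dvd_int_iff of_nat_add)
  moreover have "[int ((p - 1) choose k) = (-1) ^ k] (mod int p)" using Suc by simp
  ultimately have "[(-1) ^ k + int ((p - 1) choose (Suc k)) = 0] (mod int p)"
    by (metis cong_add_rcancel cong_sym cong_trans cong_add cong_refl)
  then have "[(-1) ^ k + int ((p - 1) choose (Suc k)) + (- ((-1) ^ k)) = 0 + (- ((-1) ^ k))] (mod int p)"
    by (rule cong_add) (rule cong_refl)
  then show ?case by simp
qed

lemma inv_modp_prop:
  assumes p: "prime p" and i: "0 < i" "i < p"
  shows "[int i * inv_modp p i = 1] (mod int p)"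
proof -
  have "coprime (int i) (int p)"
  proof -
    have "\<not> p dvd i" using i by (auto dest: dvd_imp_le)
    then have "coprime p i" using p by (simp add: prime_imp_coprime)
    then show ?thesis by (simp add: coprime_commute)
  qed
  then have "\<exists>j. [int i * j = 1] (mod int p)" by (rule cong_solve_coprime_int)
  then show ?thesis unfolding inv_modp_def by (rule someI_ex)
qed

lemma coeff_vanish:
  assumes p: "prime p" and i: "1 \<le> i" "i < p"
  shows "int p dvd ((-1) ^ i * inv_modp p i + int ((p choose i) div p))"
proof -
  define d where "d = (p choose i) div p"
  define e where "e = (-1) ^ i * inv_modp p i + int d"
  have p1: "2 \<le> p" using p prime_ge_2_nat by blast
  have pd: "p dvd (p choose i)" by (rule dvd_choose_prime) (use i p p1 in auto)
  have pd2: "p * d = p choose i" using pd by (simp add: d_def)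
  have "i * (p choose i) = p * ((p - 1) choose (i - 1))" using times_binomial_minus1_eq[of i p] i by simp
  then have "p * (i * d) = p * ((p - 1) choose (i - 1))" using pd2 by (metis mult.left_commute)
  then have id: "i * d = (p - 1) choose (i - 1)" using p1 by simp
  have c1: "[int i * inv_modp p i = 1] (mod int p)" by (rule inv_modp_prop) (use p i in auto)
  have c2: "[int (i * d) = (-1) ^ (i - 1)] (mod int p)" unfolding id by (rule choose_pm1_cong) (use p i in auto)
  have "int i * e = (-1) ^ i * (int i * inv_modp p i) + int (i * d)" by (simp add: e_def algebra_simps)
  moreover have "[(-1) ^ i * (int i * inv_modp p i) + int (i * d) = (-1) ^ i * 1 + (-1) ^ (i - 1)] (mod int p)"
    by (intro cong_add cong_mult cong_refl c1 c2)
  moreover have "(-1) ^ i * 1 + (-1) ^ (i - 1) = (0::int)"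
  proof -
    obtain j where "i = Suc j" using i by (cases i) auto
    then show ?thesis by simp
  qed
  ultimately have "[int i * e = 0] (mod int p)" by simp
  then have "int p dvd int i * e" by (simp add: cong_0_iff)
  moreover have "prime (int p)" using p by simp
  moreover have "\<not> int p dvd int i" using i by (auto dest: dvd_imp_le)
  ultimately have "int p dvd e" using prime_dvd_mult_iff by blast
  then show ?thesis by (simp add: e_def d_def)
qed


theorem proposition6p5:
  fixes p n :: nat and xt :: "'a::ring list \<Rightarrow> 'a"
  assumes "prime p" and "3 \<le> p"
    and "torsion_free TYPE('a)"
    and "odd n"
    and "hoch_cochain n xt"
    and "\<forall>xs. length xs = Suc n \<longrightarrow> (\<exists>z. hdiff n xt xs = nsm p z)"
  shows "cong_modp p (p * (n - 1) + 2) (zeta1 p n xt)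
           (\<lambda>xs. bock p (p * (n - 1) + 1) (xi1 p n xt) xs
                 - adpow n (Suc n) xt (p - 1) (bock p n xt) xs)"
proof -
  note pr = assms(1) and p3 = assms(2) and tf0 = assms(3) and n = assms(4) and x = assms(5) and dx = assms(6)
  define b where "b = bock p n xt"
  have p0: "0 < p" using p3 by simp
  have tf: "\<And>a :: 'a. nsm p a = 0 \<Longrightarrow> a = 0" using tf0 p0 unfolding torsion_free_def by blast
  have hb: "\<forall>xs. length xs = Suc n \<longrightarrow> hdiff n xt xs = nsm p (b xs)"
  proof (intro allI impI)
    fix xs :: "'a list" assume "length xs = Suc n"
    then have "\<exists>z. nsm p z = hdiff n xt xs" using dx by metis
    then have "nsm p (b xs) = hdiff n xt xs" unfolding b_def bock_def by (rule someI_ex)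
    then show "hdiff n xt xs = nsm p (b xs)" by simp
  qed
  define d where "d = (\<lambda>i. (p choose i) div p)"
  have dd: "\<And>i. 1 \<le> i \<Longrightarrow> i < p \<Longrightarrow> p choose i = p * d i"
  proof -
    fix i assume i: "1 \<le> i" "i < p"
    have "p dvd (p choose i)" by (rule dvd_choose_prime) (use i p0 pr in auto)
    then show "p choose i = p * d i" unfolding d_def by simp
  qed
  define Z0 where "Z0 = (\<lambda>xs. GG n xt b (p - 1) (\<lambda>j. p choose Suc j) xs
      - (\<Sum>i\<in>{1..p - 1}. nsm (d i) (PP n xt i (p - i) xs)))"
  have dX': "\<forall>xs. length xs = Suc (p * (n - 1) + 1) \<longrightarrow>
     hdiff (p * (n - 1) + 1) (brpow n xt p) xs = nsm p (GG n xt b (p - 1) (\<lambda>j. p choose Suc j) xs) + CC n xt p xs"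
    by (rule dX[OF n x hb]) (use p3 in simp)
  have bockp: "bock p (p * (n - 1) + 1) (xi1 p n xt) xs = Z0 xs" if len: "length xs = p * (n - 1) + 2" for xs
  proof -
    have "CC n xt p xs = - (\<Sum>i\<in>{1..p - 1}. nsm (p * d i) (PP n xt i (p - i) xs))"
      unfolding CC_def
    proof (intro arg_cong[where f=uminus] sum.cong refl)
      fix i assume "i \<in> {1..p - 1}"
      then have i: "1 \<le> i" "i < p" using p0 by auto
      show "nsm (p choose i) (PP n xt i (p - i) xs) = nsm (p * d i) (PP n xt i (p - i) xs)" unfolding dd[OF i] ..
    qed
    also have "\<dots> = nsm p (- (\<Sum>i\<in>{1..p - 1}. nsm (d i) (PP n xt i (p - i) xs)))"
      by (simp add: nsm_mult nsm_sum nsm_neg)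
    finally have "hdiff (p * (n - 1) + 1) (brpow n xt p) xs = nsm p (Z0 xs)"
      using dX' len by (simp add: Z0_def nsm_diff nsm_add nsm_neg)
    then have ex: "\<exists>z. nsm p z = hdiff (p * (n - 1) + 1) (xi1 p n xt) xs" unfolding xi1_def by metis
    define z where "z = bock p (p * (n - 1) + 1) (xi1 p n xt) xs"
    have "nsm p z = hdiff (p * (n - 1) + 1) (xi1 p n xt) xs" unfolding z_def bock_def by (rule someI_ex[OF ex])
    then have "nsm p z = nsm p (Z0 xs)" using \<open>hdiff (p * (n - 1) + 1) (brpow n xt p) xs = nsm p (Z0 xs)\<close>
      unfolding xi1_def by simp
    then have "nsm p (z - Z0 xs) = 0" by (simp add: nsm_diff)
    then have "z - Z0 xs = 0" by (rule tf)
    then show ?thesis unfolding z_def by simp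
  qed
  define c where "c = (\<lambda>i. (-1) ^ i * inv_modp p i)"
  define w where "w = (\<lambda>i. (c i + int (d i)) div int p)"
  have cw: "\<And>i. 1 \<le> i \<Longrightarrow> i < p \<Longrightarrow> c i + int (d i) = int p * w i"
  proof -
    fix i assume i: "1 \<le> i" "i < p"
    have "int p dvd (c i + int (d i))" unfolding c_def d_def by (rule coeff_vanish[OF pr i])
    then show "c i + int (d i) = int p * w i" unfolding w_def by simp
  qed
  define e where "e = (\<lambda>j. (p choose Suc j) div p)"
  have ee: "\<And>j. j < p - 1 \<Longrightarrow> p choose Suc j = p * e j"
  proof -
    fix j assume j: "j < p - 1"
    have "p dvd (p choose Suc j)" by (rule dvd_choose_prime) (use j p0 pr in auto)
    then show "p choose Suc j = p * e j" unfolding e_def by simp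
  qed
  show ?thesis unfolding cong_modp_def
  proof (intro allI impI)
    fix xs :: "'a list" assume len: "length xs = p * (n - 1) + 2"
    let ?P = "\<lambda>i. PP n xt i (p - i) xs"
    let ?F = "\<lambda>j. FF n xt b (p - 1 - j) j xs"
    have zeta: "zeta1 p n xt xs = (\<Sum>i\<in>{1..p - 1}. zsm (c i) (?P i))"
      unfolding zeta1_def c_def PP_def ..
    have GGe: "GG n xt b (p - 1) (\<lambda>j. p choose Suc j) xs = (\<Sum>j<p - 1. nsm p (nsm (e j) (?F j))) + adpow n (Suc n) xt (p - 1) b xs"
    proof -
      have "GG n xt b (p - 1) (\<lambda>j. p choose Suc j) xs = (\<Sum>j<p - 1. nsm (p choose Suc j) (?F j)) + nsm (p choose Suc (p - 1)) (?F (p - 1))"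
      proof -
        have sp: "\<And>g :: nat \<Rightarrow> 'a. (\<Sum>j\<le>p - 1. g j) = (\<Sum>j<p - 1. g j) + g (p - 1)"
          by (simp add: lessThan_Suc_atMost[symmetric])
        show ?thesis unfolding GG_def by (rule sp)
      qed
      also have "(\<Sum>j<p - 1. nsm (p choose Suc j) (?F j)) = (\<Sum>j<p - 1. nsm p (nsm (e j) (?F j)))"
        by (intro sum.cong refl) (simp add: ee nsm_mult)
      also have "nsm (p choose Suc (p - 1)) (?F (p - 1)) = adpow n (Suc n) xt (p - 1) b xs"
        using p0 by (simp add: FF_def bi_def)
      finally show ?thesis .
    qed
    have sumP: "(\<Sum>i\<in>{1..p - 1}. zsm (c i) (?P i)) + (\<Sum>i\<in>{1..p - 1}. nsm (d i) (?P i)) =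
        nsm p (\<Sum>i\<in>{1..p - 1}. zsm (w i) (?P i))"
    proof -
      have "(\<Sum>i\<in>{1..p - 1}. zsm (c i) (?P i)) + (\<Sum>i\<in>{1..p - 1}. nsm (d i) (?P i)) =
          (\<Sum>i\<in>{1..p - 1}. zsm (c i + int (d i)) (?P i))"
        by (simp add: sum.distrib[symmetric] zsm_plus)
      also have "\<dots> = (\<Sum>i\<in>{1..p - 1}. nsm p (zsm (w i) (?P i)))"
      proof (intro sum.cong refl)
        fix i assume "i \<in> {1..p - 1}"
        then have i: "1 \<le> i" "i < p" using p0 by auto
        show "zsm (c i + int (d i)) (?P i) = nsm p (zsm (w i) (?P i))" unfolding cw[OF i] by (rule zsm_pmult)
      qed
      finally show ?thesis by (simp add: nsm_sum)
    qed
    have "zeta1 p n xt xs - (bock p (p * (n - 1) + 1) (xi1 p n xt) xs - adpow n (Suc n) xt (p - 1) (bock p n xt) xs)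
      = nsm p ((\<Sum>i\<in>{1..p - 1}. zsm (w i) (?P i)) - (\<Sum>j<p - 1. nsm (e j) (?F j)))"
      unfolding bockp[OF len] zeta Z0_def GGe b_def[symmetric] nsm_diff nsm_sum[symmetric] sumP[symmetric]
      by (simp add: algebra_simps)
    then show "\<exists>z. zeta1 p n xt xs - (bock p (p * (n - 1) + 1) (xi1 p n xt) xs - adpow n (Suc n) xt (p - 1) (bock p n xt) xs) = nsm p z"
      by blast
  qed
qed


end
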